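(* Consider the binary instrumental variable model described in the context, with both treatment and outcome possibly missing: $R^D\in\{0,1\}$ indicates that $D$ is observed and $R^Y\in\{0,1\}$ that $Y$ is observed, so the observed data are $(Z,R^D,R^D D,R^Y,R^Y Y)$. Assume the IV assumptions, that $R^D\perp\!\!\!\perp (U,D,Y)\mid Z$, and that $\mathbb{P}(R^D=1\mid Z=z)>0$ for $z=0,1$. Then: (1ZD$\oplus$2Z) If $R^Y\perp\!\!\!\perp (U,Y)\mid (Z,D,R^D)$ and $\mathbb{P}(R^Y=1\mid Z=z,D=d,R^D=1)>0$ for all $z$ and $d$, then the CACE is identifiable. (1UD$\oplus$2Z) If $R^Y\perp\!\!\!\perp (Z,Y)\mid (U,D,R^D)$ and $\mathbb{P}(R^Y=1\mid U=c,D=d,R^D=1)>0$ for $d=0,1$, then the CACE is identifiable. (1UY$\oplus$2Z) If $R^Y\perp\!\!\!\perp (Z,D)\mid (U,Y,R^D)$, $Y$ is binary, and $\mathbb{P}(R^Y=1\mid U=c,Y=y,R^D=1)>0$ for $y=0,1$, then the CACE is identifiable. (1DY$\oplus$2Z) If $R^Y\perp\!\!\!\perp (Z,U)\mid (D,Y,R^D)$, $Y$ is binary, noncompliance is two-sided, $\mathbb{P}(R^Y=1\mid D=d,Y=y,R^D=1)>0$ for all $d$ and $y$, and $Y\not\!\perp\!\!\!\perp Z\mid (D=d,R^D=1)$ for $d=0,1$, then the CACE is identifiable. (1ZY$\oplus$2Z) If $R^Y\perp\!\!\!\perp (U,D)\mid (Z,Y,R^D)$, $Y$ is binary, noncompliance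 is two-sided, $\mathbb{P}(R^Y=1\mid Z=z,Y=y,R^D=1)>0$ for all $z$ and $y$, and $Y\not\!\perp\!\!\!\perp D\mid Z=z$ for $z=0,1$, then the CACE is identifiable.
   Context: $Z\in\{0,1\}$ is a binary instrument, $D\in\{0,1\}$ the treatment received, $Y$ the outcome (real-valued; "binary $Y$" means $Y\in\{0,1\}$). Potential values $D(z),Y(z)$ for $z=0,1$ are defined with respect to the instrument; observed values are $D=ZD(1)+(1-Z)D(0)$ and $Y=ZY(1)+(1-Z)Y(0)$. The latent compliance status $U$ is $a$ (always-taker) if $D(1)=D(0)=1$, $c$ (complier) if $D(1)=1,D(0)=0$, $d$ (defier) if $D(1)=0,D(0)=1$, $n$ (never-taker) if $D(1)=D(0)=0$. IV assumptions: (1) $Z\perp\!\!\!\perp\{D(1),D(0),Y(1),Y(0)\}$; (2) $D(1)\ge D(0)$ for all units (no defiers); (3) $\mathbb{E}\{D(1)-D(0)\}\neq0$; (4) $Y(1)=Y(0)$ for units with $U\in\{a,n\}$. The complier average causal effect is $\mathrm{CACE}=\mathbb{E}\{Y(1)-Y(0)\mid U=c\}$. One-sided noncompliance means $D(0)=0$ for all units (only compliers and never-takers); two-sided noncompliance is the general case in which units in both arms may fail to comply (always-takers and never-takers may both be present). Independence statements refer to the joint distribution of $(Z,U,D,Y,R^D,R^Y)$. The CACE is identifiable if it is uniquely determined by the distribution of the observed data among all joint distributions satisfying the stated assumptions. *)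

theory Defs
  imports "HOL-Probability.Probability"
begin

text \<open>A unit is described by its full-data vector
  (Z, D(1), D(0), Y(1), Y(0), R^D, R^Y).  A joint distribution of the full data is a
  probability measure on this type (with its Borel sigma-algebra).\<close>

type_synonym unit_data = "bool \<times> bool \<times> bool \<times> real \<times> real \<times> bool \<times> bool"

definition Zv :: "unit_data \<Rightarrow> bool" where "Zv w = fst w"
definition D1v :: "unit_data \<Rightarrow> bool" where "D1v w = fst (snd w)"
definition D0v :: "unit_data \<Rightarrow> bool" where "D0v w = fst (snd (snd w))"
definition Y1v :: "unit_data \<Rightarrow> real" where "Y1v w = fst (snd (snd (snd w)))"
definition Y0v :: "unit_data \<Rightarrow> real" where "Y0v w = fst (snd (snd (snd (snd w))))"
definition RDv :: "unit_data \<Rightarrow> bool" where "RDv w = fst (snd (snd (snd (snd (snd w)))))"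
definition RYv :: "unit_data \<Rightarrow> bool" where "RYv w = snd (snd (snd (snd (snd (snd w)))))"

definition Dv :: "unit_data \<Rightarrow> bool" where "Dv w = (if Zv w then D1v w else D0v w)"
definition Yv :: "unit_data \<Rightarrow> real" where "Yv w = (if Zv w then Y1v w else Y0v w)"

datatype compliance = Always | Complier | Defier | Never

definition Uv :: "unit_data \<Rightarrow> compliance" where
  "Uv w = (if D1v w then (if D0v w then Always else Complier)
           else (if D0v w then Defier else Never))"

definition obs :: "unit_data \<Rightarrow> bool \<times> bool \<times> bool \<times> bool \<times> real" where
  "obs w = (Zv w, RDv w, RDv w \<and> Dv w, RYv w, if RYv w then Yv w else 0)"

definition obs_law :: "unit_data measure \<Rightarrow> (bool \<times> bool \<times> bool \<times> bool \<times> real) measure" where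
  "obs_law M = distr M borel obs"

definition ev :: "unit_data measure \<Rightarrow> (unit_data \<Rightarrow> bool) \<Rightarrow> unit_data set" where
  "ev M P = {w \<in> space M. P w}"

definition pr :: "unit_data measure \<Rightarrow> (unit_data \<Rightarrow> bool) \<Rightarrow> real" where
  "pr M P = measure M (ev M P)"

text \<open>Conditional probability P(A | B) (defined as 0 when P(B) = 0).\<close>
definition cpr :: "unit_data measure \<Rightarrow> (unit_data \<Rightarrow> bool) \<Rightarrow> (unit_data \<Rightarrow> bool) \<Rightarrow> real" where
  "cpr M A B = pr M (\<lambda>w. A w \<and> B w) / pr M B"

definition cindep_on :: "unit_data measure \<Rightarrow> (unit_data \<Rightarrow> 'x) \<Rightarrow> (unit_data \<Rightarrow> 'y)
    \<Rightarrow> (unit_data \<Rightarrow> bool) \<Rightarrow> bool" where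
  "cindep_on M X W E \<longleftrightarrow>
     (\<forall>A B. ev M (\<lambda>w. X w \<in> A) \<in> sets M \<longrightarrow> ev M (\<lambda>w. W w \<in> B) \<in> sets M \<longrightarrow>
        pr M (\<lambda>w. X w \<in> A \<and> W w \<in> B \<and> E w) * pr M E
          = pr M (\<lambda>w. X w \<in> A \<and> E w) * pr M (\<lambda>w. W w \<in> B \<and> E w))"

definition cindep :: "unit_data measure \<Rightarrow> (unit_data \<Rightarrow> 'x) \<Rightarrow> (unit_data \<Rightarrow> 'y)
    \<Rightarrow> (unit_data \<Rightarrow> 'c) \<Rightarrow> bool" where
  "cindep M X W C \<longleftrightarrow> (\<forall>c. cindep_on M X W (\<lambda>w. C w = c))"

definition indep :: "unit_data measure \<Rightarrow> (unit_data \<Rightarrow> 'x) \<Rightarrow> (unit_data \<Rightarrow> 'y) \<Rightarrow> bool" where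
  "indep M X W \<longleftrightarrow> cindep_on M X W (\<lambda>w. True)"

text \<open>Standing model: a joint distribution of the full data for which the potential outcomes
  have finite mean (so that the CACE exists) and the IV assumptions (1)-(4) hold.\<close>
definition iv_model :: "unit_data measure \<Rightarrow> bool" where
  "iv_model M \<longleftrightarrow> prob_space M \<and> sets M = sets borel
     \<and> integrable M Y1v \<and> integrable M Y0v
     \<comment> \<open>(1) Z independent of (D(1), D(0), Y(1), Y(0))\<close>
     \<and> indep M Zv (\<lambda>w. (D1v w, D0v w, Y1v w, Y0v w))
     \<comment> \<open>(2) monotonicity: no defiers\<close>
     \<and> (AE w in M. D1v w \<or> \<not> D0v w)
     \<comment> \<open>(3) E(D(1) - D(0)) \<noteq> 0\<close>
     \<and> pr M D1v \<noteq> pr M D0v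
     \<comment> \<open>(4) exclusion restriction for always- and never-takers\<close>
     \<and> (AE w in M. Uv w \<in> {Always, Never} \<longrightarrow> Y1v w = Y0v w)"

definition CACE :: "unit_data measure \<Rightarrow> real" where
  "CACE M = (\<integral>w. (if Uv w = Complier then Y1v w - Y0v w else 0) \<partial>M) / pr M (\<lambda>w. Uv w = Complier)"

definition CACE_identifiable :: "(unit_data measure \<Rightarrow> bool) \<Rightarrow> bool" where
  "CACE_identifiable P \<longleftrightarrow>
     (\<forall>M1 M2. P M1 \<longrightarrow> P M2 \<longrightarrow> obs_law M1 = obs_law M2 \<longrightarrow> CACE M1 = CACE M2)"

definition RD_2Z :: "unit_data measure \<Rightarrow> bool" where
  "RD_2Z M \<longleftrightarrow> cindep M RDv (\<lambda>w. (Uv w, Dv w, Yv w)) Zv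
     \<and> (\<forall>z. cpr M RDv (\<lambda>w. Zv w = z) > 0)"

definition binary_Y :: "unit_data measure \<Rightarrow> bool" where
  "binary_Y M \<longleftrightarrow> (AE w in M. Y1v w \<in> {0, 1} \<and> Y0v w \<in> {0, 1})"

definition two_sided :: "unit_data measure \<Rightarrow> bool" where
  "two_sided M \<longleftrightarrow> pr M (\<lambda>w. Uv w = Always) > 0 \<and> pr M (\<lambda>w. Uv w = Never) > 0"

definition model_1ZD :: "unit_data measure \<Rightarrow> bool" where
  "model_1ZD M \<longleftrightarrow> iv_model M \<and> RD_2Z M
     \<and> cindep M RYv (\<lambda>w. (Uv w, Yv w)) (\<lambda>w. (Zv w, Dv w, RDv w))
     \<and> (\<forall>z d. cpr M RYv (\<lambda>w. Zv w = z \<and> Dv w = d \<and> RDv w) > 0)"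

definition model_1UD :: "unit_data measure \<Rightarrow> bool" where
  "model_1UD M \<longleftrightarrow> iv_model M \<and> RD_2Z M
     \<and> cindep M RYv (\<lambda>w. (Zv w, Yv w)) (\<lambda>w. (Uv w, Dv w, RDv w))
     \<and> (\<forall>d. cpr M RYv (\<lambda>w. Uv w = Complier \<and> Dv w = d \<and> RDv w) > 0)"

definition model_1UY :: "unit_data measure \<Rightarrow> bool" where
  "model_1UY M \<longleftrightarrow> iv_model M \<and> RD_2Z M \<and> binary_Y M
     \<and> cindep M RYv (\<lambda>w. (Zv w, Dv w)) (\<lambda>w. (Uv w, Yv w, RDv w))
     \<and> (\<forall>y\<in>{0, 1}. cpr M RYv (\<lambda>w. Uv w = Complier \<and> Yv w = y \<and> RDv w) > 0)"

definition model_1DY :: "unit_data measure \<Rightarrow> bool" where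
  "model_1DY M \<longleftrightarrow> iv_model M \<and> RD_2Z M \<and> binary_Y M \<and> two_sided M
     \<and> cindep M RYv (\<lambda>w. (Zv w, Uv w)) (\<lambda>w. (Dv w, Yv w, RDv w))
     \<and> (\<forall>d. \<forall>y\<in>{0, 1}. cpr M RYv (\<lambda>w. Dv w = d \<and> Yv w = y \<and> RDv w) > 0)
     \<and> (\<forall>d. \<not> cindep_on M Yv Zv (\<lambda>w. Dv w = d \<and> RDv w))"

definition model_1ZY :: "unit_data measure \<Rightarrow> bool" where
  "model_1ZY M \<longleftrightarrow> iv_model M \<and> RD_2Z M \<and> binary_Y M \<and> two_sided M
     \<and> cindep M RYv (\<lambda>w. (Uv w, Dv w)) (\<lambda>w. (Zv w, Yv w, RDv w))
     \<and> (\<forall>z. \<forall>y\<in>{0, 1}. cpr M RYv (\<lambda>w. Zv w = z \<and> Yv w = y \<and> RDv w) > 0)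
     \<and> (\<forall>z. \<not> cindep_on M Yv Dv (\<lambda>w. Zv w = z))"

end

theory Submission
  imports Defs
begin


instance bool :: second_countable_topology
proof
  show "\<exists>B::bool set set. countable B \<and> open = generate_topology B"
    by (intro exI[of _ "range lessThan \<union> range greaterThan"]) (auto simp: open_bool_def)
qed

lemma bool_meas_iff: "(f :: 'a \<Rightarrow> bool) \<in> M \<rightarrow>\<^sub>M borel \<longleftrightarrow> f \<in> M \<rightarrow>\<^sub>M count_space UNIV"
  using measurable_cong_sets[OF refl sets_borel_eq_count_space[where 'a=bool], of M] by simp

lemma pair_borel_meas: "(\<lambda>x. (f x, g x)) \<in> M \<rightarrow>\<^sub>M borel \<Otimes>\<^sub>M borel \<Longrightarrow>
   (\<lambda>x. (f x, g x)) \<in> M \<rightarrow>\<^sub>M (borel :: ('a::second_countable_topology \<times> 'b::second_countable_topology) measure)"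
  by (simp add: borel_prod)

lemma cont_meas: "continuous_on UNIV f \<Longrightarrow> f \<in> borel_measurable borel"
  by (rule borel_measurable_continuous_onI)

lemma Zv_meas[measurable]: "Zv \<in> borel \<rightarrow>\<^sub>M count_space UNIV"
  unfolding Zv_def[abs_def] bool_meas_iff[symmetric] by (intro cont_meas continuous_intros)
lemma D1v_meas[measurable]: "D1v \<in> borel \<rightarrow>\<^sub>M count_space UNIV"
  unfolding D1v_def[abs_def] bool_meas_iff[symmetric] by (intro cont_meas continuous_intros)
lemma D0v_meas[measurable]: "D0v \<in> borel \<rightarrow>\<^sub>M count_space UNIV"
  unfolding D0v_def[abs_def] bool_meas_iff[symmetric] by (intro cont_meas continuous_intros)
lemma RDv_meas[measurable]: "RDv \<in> borel \<rightarrow>\<^sub>M count_space UNIV"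
  unfolding RDv_def[abs_def] bool_meas_iff[symmetric] by (intro cont_meas continuous_intros)
lemma RYv_meas[measurable]: "RYv \<in> borel \<rightarrow>\<^sub>M count_space UNIV"
  unfolding RYv_def[abs_def] bool_meas_iff[symmetric] by (intro cont_meas continuous_intros)
lemma Y1v_meas[measurable]: "Y1v \<in> borel_measurable borel"
  unfolding Y1v_def[abs_def] by (intro cont_meas continuous_intros)
lemma Y0v_meas[measurable]: "Y0v \<in> borel_measurable borel"
  unfolding Y0v_def[abs_def] by (intro cont_meas continuous_intros)
lemma Yv_meas[measurable]: "Yv \<in> borel_measurable borel"
  unfolding Yv_def[abs_def] by measurable
lemma Dv_meas[measurable]: "Dv \<in> borel \<rightarrow>\<^sub>M count_space UNIV"
  unfolding Dv_def[abs_def] by measurable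
lemma Uv_meas[measurable]: "Uv \<in> borel \<rightarrow>\<^sub>M count_space UNIV"
  unfolding Uv_def[abs_def] by measurable

lemma bool_borel: "(f :: 'a \<Rightarrow> bool) \<in> M \<rightarrow>\<^sub>M count_space UNIV \<Longrightarrow> f \<in> M \<rightarrow>\<^sub>M borel"
  by (simp add: bool_meas_iff)

lemma obs_meas[measurable]: "obs \<in> borel_measurable borel"
proof -
  have b: "(\<lambda>w. (RYv w, if RYv w then Yv w else 0)) \<in> borel_measurable borel"
    by (rule pair_borel_meas, rule measurable_Pair) (auto intro: bool_borel)
  have c: "(\<lambda>w. (RDv w \<and> Dv w, RYv w, if RYv w then Yv w else 0)) \<in> borel_measurable borel"
    by (rule pair_borel_meas, rule measurable_Pair) (auto intro: bool_borel b)
  have d: "(\<lambda>w. (RDv w, RDv w \<and> Dv w, RYv w, if RYv w then Yv w else 0)) \<in> borel_measurable borel"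
    by (rule pair_borel_meas, rule measurable_Pair) (auto intro: bool_borel c)
  show ?thesis unfolding obs_def[abs_def]
    by (rule pair_borel_meas, rule measurable_Pair) (auto intro: bool_borel d)
qed

lemma fst_borel[measurable]: "fst \<in> (borel::('a::second_countable_topology \<times> 'b::second_countable_topology) measure) \<rightarrow>\<^sub>M borel"
  by (simp add: borel_prod[symmetric])
lemma snd_borel[measurable]: "snd \<in> (borel::('a::second_countable_topology \<times> 'b::second_countable_topology) measure) \<rightarrow>\<^sub>M borel"
  by (simp add: borel_prod[symmetric])

type_synonym obs_t = "bool \<times> bool \<times> bool \<times> bool \<times> real"

definition oset :: "bool \<Rightarrow> bool set \<Rightarrow> bool set \<Rightarrow> bool set \<Rightarrow> real set \<Rightarrow> obs_t set" where
  "oset z Rs Es Qs B = {x. fst x = z \<and> fst (snd x) \<in> Rs \<and> fst (snd (snd x)) \<in> Es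
      \<and> fst (snd (snd (snd x))) \<in> Qs \<and> snd (snd (snd (snd x))) \<in> B}"

lemma bool_set_borel: "(A::bool set) \<in> sets borel"
  by (simp add: sets_borel_eq_count_space)

lemma vimage_borel: "f \<in> borel \<rightarrow>\<^sub>M borel \<Longrightarrow> A \<in> sets borel \<Longrightarrow> {x. f x \<in> A} \<in> sets borel"
  using measurable_sets[of f borel borel A] by (simp add: vimage_def)

lemma oset_borel: "B \<in> sets borel \<Longrightarrow> oset z Rs Es Qs B \<in> sets borel"
proof -
  assume B: "B \<in> sets borel"
  have m1: "(\<lambda>x::obs_t. fst x) \<in> borel \<rightarrow>\<^sub>M borel" by measurable
  have m2: "(\<lambda>x::obs_t. fst (snd x)) \<in> borel \<rightarrow>\<^sub>M borel" by measurable
  have m3: "(\<lambda>x::obs_t. fst (snd (snd x))) \<in> borel \<rightarrow>\<^sub>M borel" by measurable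
  have m4: "(\<lambda>x::obs_t. fst (snd (snd (snd x)))) \<in> borel \<rightarrow>\<^sub>M borel" by measurable
  have m5: "(\<lambda>x::obs_t. snd (snd (snd (snd x)))) \<in> borel \<rightarrow>\<^sub>M borel" by measurable
  have "oset z Rs Es Qs B = {x. fst x \<in> {z}} \<inter> {x. fst (snd x) \<in> Rs} \<inter> {x. fst (snd (snd x)) \<in> Es}
     \<inter> {x. fst (snd (snd (snd x))) \<in> Qs} \<inter> {x::obs_t. snd (snd (snd (snd x))) \<in> B}"
    unfolding oset_def by auto
  also have "\<dots> \<in> sets borel"
    using vimage_borel[OF m1 bool_set_borel] vimage_borel[OF m2 bool_set_borel] vimage_borel[OF m3 bool_set_borel]
      vimage_borel[OF m4 bool_set_borel] vimage_borel[OF m5 B] by (intro sets.Int) auto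
  finally show ?thesis .
qed


lemma cpr_pos: "cpr M A B > 0 \<Longrightarrow> pr M (\<lambda>w. A w \<and> B w) > 0 \<and> pr M B > 0"
  unfolding cpr_def pr_def by (auto simp: zero_less_divide_iff)

locale ivm = fixes M :: "unit_data measure" assumes ivm: "iv_model M"
begin

lemma prob_ivm: "prob_space M" using ivm unfolding iv_model_def by (rule conjunct1)
sublocale prob_space M by (rule prob_ivm)

lemma sets_M: "sets M = sets borel" using ivm unfolding iv_model_def by blast
lemma space_M: "space M = UNIV"
  using sets_eq_imp_space_eq[OF sets_M] by simp

lemma pr_eq: "pr M P = measure M {w. P w}"
  by (simp add: pr_def ev_def space_M)

lemma pred_sets: "Measurable.pred borel P \<Longrightarrow> {w. P w} \<in> sets M"
proof -
  assume "Measurable.pred borel P"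
  then have "{x\<in>space borel. P x} \<in> sets borel" by (rule pred_def[THEN iffD1])
  then show ?thesis unfolding sets_M by simp
qed

lemma ev_eq: "ev M P = {w. P w}" by (simp add: ev_def space_M)

lemma ev_sets: "Measurable.pred borel P \<Longrightarrow> ev M P \<in> sets M"
  unfolding ev_eq by (rule pred_sets)

lemma pr_nonneg: "0 \<le> pr M P" by (simp add: pr_eq)
lemma pr_le1: "pr M P \<le> 1" by (simp add: pr_eq)
lemma pr_True: "pr M (\<lambda>w. True) = 1"
proof -
  have "{w::unit_data. True} = space M" using space_M by simp
  then show ?thesis unfolding pr_eq using prob_space by simp
qed

lemma pr_add:
  assumes [measurable]: "Measurable.pred borel P" "Measurable.pred borel Q"
  shows "pr M (\<lambda>w. P w \<and> Q w) + pr M (\<lambda>w. P w \<and> \<not> Q w) = pr M P"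
proof -
  have s1: "{w. P w \<and> Q w} \<in> sets M" by (rule pred_sets) measurable
  have s2: "{w. P w \<and> \<not> Q w} \<in> sets M" by (rule pred_sets) measurable
  have "{w. P w} = {w. P w \<and> Q w} \<union> {w. P w \<and> \<not> Q w}" by auto
  moreover have "measure M ({w. P w \<and> Q w} \<union> {w. P w \<and> \<not> Q w}) = measure M {w. P w \<and> Q w} + measure M {w. P w \<and> \<not> Q w}"
    by (rule finite_measure_Union[OF s1 s2]) blast
  ultimately show ?thesis by (simp add: pr_eq)
qed

lemma pr_mono:
  assumes "Measurable.pred borel Q" "\<And>w. P w \<Longrightarrow> Q w"
  shows "pr M P \<le> pr M Q"
proof -
  have "{w. Q w} \<in> sets M" by (rule pred_sets[OF assms(1)])
  moreover have "{w. P w} \<subseteq> {w. Q w}" using assms(2) by blast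
  ultimately show ?thesis unfolding pr_eq by (rule finite_measure_mono[rotated])
qed

lemma pr_zero_sub:
  assumes "Measurable.pred borel Q" "\<And>w. P w \<Longrightarrow> Q w" "pr M Q = 0"
  shows "pr M P = 0"
proof -
  have "pr M P \<le> pr M Q" by (rule pr_mono[OF assms(1,2)])
  then show ?thesis using assms(3) pr_nonneg[of P] by linarith
qed

lemma pr_AE:
  assumes "AE w in M. P w \<longleftrightarrow> Q w" "Measurable.pred borel P" "Measurable.pred borel Q"
  shows "pr M P = pr M Q"
proof -
  have "AE w in M. w \<in> {w. P w} \<longleftrightarrow> w \<in> {w. Q w}" using assms(1) by simp
  then show ?thesis unfolding pr_eq by (rule measure_eq_AE) (rule pred_sets, fact)+
qed

lemma cindep_bool:
  fixes X :: "unit_data \<Rightarrow> bool"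
  assumes "cindep M X W C" "Measurable.pred borel X" "Measurable.pred borel (\<lambda>w. W w \<in> B)"
  shows "pr M (\<lambda>w. X w \<and> W w \<in> B \<and> C w = c) * pr M (\<lambda>w. C w = c)
       = pr M (\<lambda>w. X w \<and> C w = c) * pr M (\<lambda>w. W w \<in> B \<and> C w = c)"
proof -
  have "Measurable.pred borel (\<lambda>w. X w \<in> {True})" using assms(2) by simp
  then have e1: "ev M (\<lambda>w. X w \<in> {True}) \<in> sets M" by (rule ev_sets)
  have e2: "ev M (\<lambda>w. W w \<in> B) \<in> sets M" using assms(3) by (rule ev_sets)
  have "cindep_on M X W (\<lambda>w. C w = c)" using assms(1) unfolding cindep_def by blast
  then have "pr M (\<lambda>w. X w \<in> {True} \<and> W w \<in> B \<and> C w = c) * pr M (\<lambda>w. C w = c)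
       = pr M (\<lambda>w. X w \<in> {True} \<and> C w = c) * pr M (\<lambda>w. W w \<in> B \<and> C w = c)"
    unfolding cindep_on_def using e1 e2 by blast
  then show ?thesis by simp
qed

lemma indep_Z:
  assumes "Measurable.pred borel (\<lambda>w. (D1v w, D0v w, Y1v w, Y0v w) \<in> B)"
  shows "pr M (\<lambda>w. Zv w = z \<and> (D1v w, D0v w, Y1v w, Y0v w) \<in> B) = pr M (\<lambda>w. Zv w = z) * pr M (\<lambda>w. (D1v w, D0v w, Y1v w, Y0v w) \<in> B)"
proof -
  have i: "indep M Zv (\<lambda>w. (D1v w, D0v w, Y1v w, Y0v w))" using ivm unfolding iv_model_def by blast
  have "Measurable.pred borel (\<lambda>w. Zv w = z)" by measurable
  then have "Measurable.pred borel (\<lambda>w. Zv w \<in> {z})" by simp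
  then have e1: "ev M (\<lambda>w. Zv w \<in> {z}) \<in> sets M" by (rule ev_sets)
  have e2: "ev M (\<lambda>w. (D1v w, D0v w, Y1v w, Y0v w) \<in> B) \<in> sets M" using assms by (rule ev_sets)
  have "pr M (\<lambda>w. Zv w \<in> {z} \<and> (D1v w, D0v w, Y1v w, Y0v w) \<in> B \<and> True) * pr M (\<lambda>w. True)
     = pr M (\<lambda>w. Zv w \<in> {z} \<and> True) * pr M (\<lambda>w. (D1v w, D0v w, Y1v w, Y0v w) \<in> B \<and> True)"
    using i e1 e2 unfolding indep_def cindep_on_def by blast
  then show ?thesis by (simp add: pr_True)
qed

lemma no_def: "AE w in M. Uv w \<noteq> Defier"
proof -
  have "AE w in M. D1v w \<or> \<not> D0v w" using ivm unfolding iv_model_def by blast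
  then show ?thesis by (rule AE_mp) (rule AE_I2, simp add: Uv_def)
qed

lemma excl: "AE w in M. Uv w \<in> {Always, Never} \<longrightarrow> Y1v w = Y0v w"
  using ivm unfolding iv_model_def by blast

end


context ivm begin

lemma meas_M: "f \<in> borel \<rightarrow>\<^sub>M N \<Longrightarrow> f \<in> M \<rightarrow>\<^sub>M N"
  using measurable_cong_sets[OF sets_M refl, of N] by simp

lemma pr_cong: "(\<And>w. P w = Q w) \<Longrightarrow> pr M P = pr M Q"
  by (rule arg_cong[where f="pr M"]) (rule ext)

lemma pr_False: "pr M (\<lambda>w. False) = 0" by (simp add: pr_eq)

lemma pc_eq: "pr M (\<lambda>w. Uv w = Complier) = pr M D1v - pr M D0v"
proof -
  have a1: "pr M (\<lambda>w. D1v w \<and> D0v w) + pr M (\<lambda>w. D1v w \<and> \<not> D0v w) = pr M D1v"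
    by (rule pr_add) measurable
  have a2: "pr M (\<lambda>w. D0v w \<and> D1v w) + pr M (\<lambda>w. D0v w \<and> \<not> D1v w) = pr M D0v"
    by (rule pr_add) measurable
  have "AE w in M. (D0v w \<and> \<not> D1v w) \<longleftrightarrow> False"
    using no_def by (rule AE_mp) (rule AE_I2, auto simp: Uv_def)
  then have a3: "pr M (\<lambda>w. D0v w \<and> \<not> D1v w) = 0"
    using pr_AE[of "\<lambda>w. D0v w \<and> \<not> D1v w" "\<lambda>w. False"] pr_False by simp
  have a4: "pr M (\<lambda>w. D0v w \<and> D1v w) = pr M (\<lambda>w. D1v w \<and> D0v w)" by (rule pr_cong) auto
  have a5: "pr M (\<lambda>w. Uv w = Complier) = pr M (\<lambda>w. D1v w \<and> \<not> D0v w)" by (rule pr_cong) (auto simp: Uv_def)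
  show ?thesis using a1 a2 a3 a4 a5 by linarith
qed

lemma integrable_Y1: "integrable M Y1v" using ivm unfolding iv_model_def by blast
lemma integrable_Y0: "integrable M Y0v" using ivm unfolding iv_model_def by blast

lemma CACE_Y: "CACE M = (integral\<^sup>L M Y1v - integral\<^sup>L M Y0v) / pr M (\<lambda>w. Uv w = Complier)"
proof -
  have m1: "(\<lambda>w. if Uv w = Complier then Y1v w - Y0v w else 0) \<in> borel_measurable M"
    by (rule meas_M) measurable
  have m2: "(\<lambda>w. Y1v w - Y0v w) \<in> borel_measurable M"
    by (rule meas_M) measurable
  have "AE w in M. (if Uv w = Complier then Y1v w - Y0v w else 0) = Y1v w - Y0v w"
  proof (rule AE_mp[OF AE_conjI[OF no_def excl]], rule AE_I2, rule impI)
    fix w assume "Uv w \<noteq> Defier \<and> (Uv w \<in> {Always, Never} \<longrightarrow> Y1v w = Y0v w)"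
    then show "(if Uv w = Complier then Y1v w - Y0v w else 0) = Y1v w - Y0v w"
      by (cases "Uv w") auto
  qed
  then have "integral\<^sup>L M (\<lambda>w. if Uv w = Complier then Y1v w - Y0v w else 0) = integral\<^sup>L M (\<lambda>w. Y1v w - Y0v w)"
    by (rule integral_cong_AE[OF m1 m2])
  also have "\<dots> = integral\<^sup>L M Y1v - integral\<^sup>L M Y0v"
    by (rule Bochner_Integration.integral_diff[OF integrable_Y1 integrable_Y0])
  finally show ?thesis unfolding CACE_def by simp
qed

lemma integrable_X: "integrable M (\<lambda>w. if Uv w = Complier then Y1v w else 0)"
proof (rule Bochner_Integration.integrable_bound[OF integrable_Y1])
  show "(\<lambda>w. if Uv w = Complier then Y1v w else 0) \<in> borel_measurable M" by (rule meas_M) measurable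
  show "AE w in M. norm (if Uv w = Complier then Y1v w else 0) \<le> norm (Y1v w)" by (rule AE_I2) simp
qed
lemma integrable_X0: "integrable M (\<lambda>w. if Uv w = Complier then Y0v w else 0)"
proof (rule Bochner_Integration.integrable_bound[OF integrable_Y0])
  show "(\<lambda>w. if Uv w = Complier then Y0v w else 0) \<in> borel_measurable M" by (rule meas_M) measurable
  show "AE w in M. norm (if Uv w = Complier then Y0v w else 0) \<le> norm (Y0v w)" by (rule AE_I2) simp
qed

lemma CACE_X: "CACE M = (integral\<^sup>L M (\<lambda>w. if Uv w = Complier then Y1v w else 0)
    - integral\<^sup>L M (\<lambda>w. if Uv w = Complier then Y0v w else 0)) / pr M (\<lambda>w. Uv w = Complier)"
proof -
  have "(\<lambda>w. if Uv w = Complier then Y1v w - Y0v w else 0) =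
     (\<lambda>w. (if Uv w = Complier then Y1v w else 0) - (if Uv w = Complier then Y0v w else 0))" by auto
  then have "integral\<^sup>L M (\<lambda>w. if Uv w = Complier then Y1v w - Y0v w else 0) =
     integral\<^sup>L M (\<lambda>w. if Uv w = Complier then Y1v w else 0) - integral\<^sup>L M (\<lambda>w. if Uv w = Complier then Y0v w else 0)"
    using Bochner_Integration.integral_diff[OF integrable_X integrable_X0] by simp
  then show ?thesis unfolding CACE_def by simp
qed

lemma int_binary:
  assumes f: "f \<in> borel_measurable borel" and ae: "AE w in M. f w \<in> {0, 1}"
  shows "integral\<^sup>L M f = pr M (\<lambda>w. f w = 1)"
proof -
  have s: "{w. f w = 1} \<in> sets M" by (rule pred_sets) (use f in measurable)
  have "AE w in M. f w = indicator {w. f w = 1} w"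
    using ae by (rule AE_mp) (rule AE_I2, auto simp: indicator_def)
  moreover have gm: "(indicator {w. f w = 1} :: unit_data \<Rightarrow> real) \<in> borel_measurable M"
    using s by (rule borel_measurable_indicator)
  ultimately have "integral\<^sup>L M f = integral\<^sup>L M (indicator {w. f w = 1} :: unit_data \<Rightarrow> real)"
    using integral_cong_AE[OF meas_M[OF f] gm] by blast
  also have "\<dots> = measure M {w. f w = 1}" by (simp add: space_M)
  finally show ?thesis by (simp add: pr_eq)
qed

end

lemma int_ident:
  fixes f :: "unit_data \<Rightarrow> real"
  assumes "ivm M1" "ivm M2" and f: "f \<in> borel_measurable borel"
    and eq: "\<And>B. B \<in> sets borel \<Longrightarrow> pr M1 (\<lambda>w. f w \<in> B) = pr M2 (\<lambda>w. f w \<in> B)"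
  shows "integral\<^sup>L M1 f = integral\<^sup>L M2 f"
proof -
  interpret A: ivm M1 by fact
  interpret B: ivm M2 by fact
  have f1: "f \<in> M1 \<rightarrow>\<^sub>M borel" by (rule A.meas_M[OF f])
  have f2: "f \<in> M2 \<rightarrow>\<^sub>M borel" by (rule B.meas_M[OF f])
  have "distr M1 borel f = distr M2 borel f"
  proof (rule measure_eqI)
    show "sets (distr M1 borel f) = sets (distr M2 borel f)" by simp
    fix S assume "S \<in> sets (distr M1 borel f)"
    then have S: "S \<in> sets borel" by simp
    have "emeasure (distr M1 borel f) S = emeasure M1 (f -` S \<inter> space M1)" by (rule emeasure_distr[OF f1 S])
    also have "\<dots> = ennreal (pr M1 (\<lambda>w. f w \<in> S))"
      by (simp add: A.emeasure_eq_measure A.pr_eq A.space_M vimage_def)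
    also have "\<dots> = ennreal (pr M2 (\<lambda>w. f w \<in> S))" using eq[OF S] by simp
    also have "\<dots> = emeasure M2 (f -` S \<inter> space M2)"
      by (simp add: B.emeasure_eq_measure B.pr_eq B.space_M vimage_def)
    also have "\<dots> = emeasure (distr M2 borel f) S" by (rule emeasure_distr[OF f2 S, symmetric])
    finally show "emeasure (distr M1 borel f) S = emeasure (distr M2 borel f) S" .
  qed
  then have "integral\<^sup>L (distr M1 borel f) (\<lambda>x. x) = integral\<^sup>L (distr M2 borel f) (\<lambda>x::real. x)" by simp
  then show ?thesis
    using integral_distr[OF f1, of "\<lambda>x::real. x"] integral_distr[OF f2, of "\<lambda>x::real. x"] by simp
qed

definition oP :: "bool \<Rightarrow> bool set \<Rightarrow> bool set \<Rightarrow> bool set \<Rightarrow> real set \<Rightarrow> unit_data \<Rightarrow> bool" where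
  "oP z Rs Es Qs B w \<longleftrightarrow> obs w \<in> oset z Rs Es Qs B"

lemma oP_iff: "oP z Rs Es Qs B w \<longleftrightarrow> Zv w = z \<and> RDv w \<in> Rs \<and> (RDv w \<and> Dv w) \<in> Es \<and> RYv w \<in> Qs
   \<and> (if RYv w then Yv w else 0) \<in> B"
  by (simp add: oP_def oset_def obs_def)

lemma obs_id:
  assumes "ivm M1" "ivm M2" "obs_law M1 = obs_law M2" "B \<in> sets borel"
  shows "pr M1 (oP z Rs Es Qs B) = pr M2 (oP z Rs Es Qs B)"
proof -
  interpret A: ivm M1 by fact
  interpret B: ivm M2 by fact
  have S: "oset z Rs Es Qs B \<in> sets borel" by (rule oset_borel[OF assms(4)])
  have "pr M1 (oP z Rs Es Qs B) = measure (obs_law M1) (oset z Rs Es Qs B)"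
    unfolding obs_law_def using measure_distr[OF A.meas_M[OF obs_meas] S]
    by (simp add: A.pr_eq A.space_M oP_def vimage_def)
  also have "\<dots> = measure (obs_law M2) (oset z Rs Es Qs B)" using assms(3) by simp
  also have "\<dots> = pr M2 (oP z Rs Es Qs B)"
    unfolding obs_law_def using measure_distr[OF B.meas_M[OF obs_meas] S]
    by (simp add: B.pr_eq B.space_M oP_def vimage_def)
  finally show ?thesis .
qed

locale ivm2 = ivm + assumes rd: "RD_2Z M"
begin

lemma rd_ci: "cindep M RDv (\<lambda>w. (Uv w, Dv w, Yv w)) Zv" using rd unfolding RD_2Z_def by blast

lemma K_pos: "pr M (\<lambda>w. RDv w \<and> Zv w = z) > 0" and Z_pos: "pr M (\<lambda>w. Zv w = z) > 0"
proof -
  have "cpr M RDv (\<lambda>w. Zv w = z) > 0" using rd unfolding RD_2Z_def by blast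
  from cpr_pos[OF this] show "pr M (\<lambda>w. RDv w \<and> Zv w = z) > 0" "pr M (\<lambda>w. Zv w = z) > 0" by auto
qed

lemma L_ZRD:
  fixes S :: "compliance \<Rightarrow> bool \<Rightarrow> real \<Rightarrow> bool"
  assumes m1: "Measurable.pred borel (\<lambda>w. S (Uv w) (Dv w) (Yv w))"
      and m2: "Measurable.pred borel (\<lambda>w. S (Uv w) (if z then D1v w else D0v w) (if z then Y1v w else Y0v w))"
  shows "pr M (\<lambda>w. S (Uv w) (Dv w) (Yv w) \<and> Zv w = z \<and> RDv w)
     = pr M (\<lambda>w. RDv w \<and> Zv w = z) * pr M (\<lambda>w. S (Uv w) (if z then D1v w else D0v w) (if z then Y1v w else Y0v w))"
proof -
  define B where "B = {(u,d,y). S u d y}"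
  have "Measurable.pred borel (\<lambda>w. (Uv w, Dv w, Yv w) \<in> B)" using m1 by (simp add: B_def)
  from cindep_bool[OF rd_ci RDv_meas this, of z]
  have c1: "pr M (\<lambda>w. RDv w \<and> (Uv w, Dv w, Yv w) \<in> B \<and> Zv w = z) * pr M (\<lambda>w. Zv w = z)
     = pr M (\<lambda>w. RDv w \<and> Zv w = z) * pr M (\<lambda>w. (Uv w, Dv w, Yv w) \<in> B \<and> Zv w = z)" .
  define B2 where "B2 = {(d1,d0,y1,y0). S (if d1 then (if d0 then Always else Complier) else (if d0 then Defier else Never))
     (if z then d1 else d0) (if z then y1 else y0)}"
  have e0: "\<And>w. ((D1v w, D0v w, Y1v w, Y0v w) \<in> B2) = S (Uv w) (if z then D1v w else D0v w) (if z then Y1v w else Y0v w)"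
    by (simp add: B2_def Uv_def)
  have "Measurable.pred borel (\<lambda>w. (D1v w, D0v w, Y1v w, Y0v w) \<in> B2)" using m2 by (simp only: e0)
  from indep_Z[OF this, of z]
  have c2: "pr M (\<lambda>w. Zv w = z \<and> (D1v w, D0v w, Y1v w, Y0v w) \<in> B2)
     = pr M (\<lambda>w. Zv w = z) * pr M (\<lambda>w. S (Uv w) (if z then D1v w else D0v w) (if z then Y1v w else Y0v w))"
    by (simp only: e0)
  have e1: "pr M (\<lambda>w. (Uv w, Dv w, Yv w) \<in> B \<and> Zv w = z) = pr M (\<lambda>w. Zv w = z \<and> (D1v w, D0v w, Y1v w, Y0v w) \<in> B2)"
    by (rule pr_cong) (auto simp: B_def e0 Dv_def Yv_def)
  have e2: "pr M (\<lambda>w. S (Uv w) (Dv w) (Yv w) \<and> Zv w = z \<and> RDv w) = pr M (\<lambda>w. RDv w \<and> (Uv w, Dv w, Yv w) \<in> B \<and> Zv w = z)"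
    by (rule pr_cong) (auto simp: B_def)
  have zp: "pr M (\<lambda>w. Zv w = z) > 0" by (rule Z_pos)
  have "pr M (\<lambda>w. S (Uv w) (Dv w) (Yv w) \<and> Zv w = z \<and> RDv w) * pr M (\<lambda>w. Zv w = z)
     = (pr M (\<lambda>w. RDv w \<and> Zv w = z) * pr M (\<lambda>w. S (Uv w) (if z then D1v w else D0v w) (if z then Y1v w else Y0v w))) * pr M (\<lambda>w. Zv w = z)"
    using c1 c2 e1 e2 by (simp only: mult_ac)
  then show ?thesis using zp by simp
qed

end


context ivm2 begin

lemma pD_pr: "pr M (\<lambda>w. if z then D1v w else D0v w) =
    pr M (oP z {True} {True} UNIV UNIV) / pr M (oP z {True} UNIV UNIV UNIV)"
proof -
  have "pr M (\<lambda>w. Dv w \<and> Zv w = z \<and> RDv w) = pr M (\<lambda>w. RDv w \<and> Zv w = z) * pr M (\<lambda>w. if z then D1v w else D0v w)"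
    using L_ZRD[of "\<lambda>u d y. d" z] by simp
  moreover have "pr M (\<lambda>w. Dv w \<and> Zv w = z \<and> RDv w) = pr M (oP z {True} {True} UNIV UNIV)"
    by (rule pr_cong) (auto simp: oP_iff)
  moreover have "pr M (\<lambda>w. RDv w \<and> Zv w = z) = pr M (oP z {True} UNIV UNIV UNIV)"
    by (rule pr_cong) (auto simp: oP_iff)
  ultimately show ?thesis using K_pos[of z] by (simp add: field_simps)
qed

lemma pc_obs: "pr M (\<lambda>w. Uv w = Complier) =
   pr M (oP True {True} {True} UNIV UNIV) / pr M (oP True {True} UNIV UNIV UNIV)
 - pr M (oP False {True} {True} UNIV UNIV) / pr M (oP False {True} UNIV UNIV UNIV)"
  using pc_eq pD_pr[of True] pD_pr[of False] by simp

lemma K_obs: "pr M (\<lambda>w. RDv w \<and> Zv w = z) = pr M (oP z {True} UNIV UNIV UNIV)"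
  by (rule pr_cong) (auto simp: oP_iff)

lemma Yz_pr:
  assumes [measurable]: "B \<in> sets borel"
  shows "pr M (\<lambda>w. (if z then Y1v w else Y0v w) \<in> B) =
    pr M (\<lambda>w. Yv w \<in> B \<and> Zv w = z \<and> RDv w) / pr M (\<lambda>w. RDv w \<and> Zv w = z)"
proof -
  have "pr M (\<lambda>w. Yv w \<in> B \<and> Zv w = z \<and> RDv w) = pr M (\<lambda>w. RDv w \<and> Zv w = z) * pr M (\<lambda>w. (if z then Y1v w else Y0v w) \<in> B)"
    by (rule L_ZRD[of "\<lambda>u d y. y \<in> B" z]) measurable
  then show ?thesis using K_pos[of z] by (simp add: field_simps)
qed

lemma Xz_pr:
  assumes [measurable]: "B \<in> sets borel"
  shows "pr M (\<lambda>w. (if Uv w = Complier then (if z then Y1v w else Y0v w) else 0) \<in> B) =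
    pr M (\<lambda>w. Yv w \<in> B \<and> Uv w = Complier \<and> Zv w = z \<and> RDv w) / pr M (\<lambda>w. RDv w \<and> Zv w = z)
    + (if (0::real) \<in> B then pr M (\<lambda>w. Uv w \<noteq> Complier) else 0)"
proof -
  have a: "pr M (\<lambda>w. (if Uv w = Complier then (if z then Y1v w else Y0v w) else 0) \<in> B \<and> Uv w = Complier)
     + pr M (\<lambda>w. (if Uv w = Complier then (if z then Y1v w else Y0v w) else 0) \<in> B \<and> \<not> Uv w = Complier)
     = pr M (\<lambda>w. (if Uv w = Complier then (if z then Y1v w else Y0v w) else 0) \<in> B)"
    by (rule pr_add) measurable
  have "pr M (\<lambda>w. Yv w \<in> B \<and> Uv w = Complier \<and> Zv w = z \<and> RDv w) = pr M (\<lambda>w. RDv w \<and> Zv w = z) * pr M (\<lambda>w. (if z then Y1v w else Y0v w) \<in> B \<and> Uv w = Complier)"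
    by (rule L_ZRD[of "\<lambda>u d y. y \<in> B \<and> u = Complier" z, simplified]) measurable
  moreover have "pr M (\<lambda>w. (if Uv w = Complier then (if z then Y1v w else Y0v w) else 0) \<in> B \<and> Uv w = Complier)
      = pr M (\<lambda>w. (if z then Y1v w else Y0v w) \<in> B \<and> Uv w = Complier)"
    by (rule pr_cong) auto
  moreover have "pr M (\<lambda>w. (if Uv w = Complier then (if z then Y1v w else Y0v w) else 0) \<in> B \<and> \<not> Uv w = Complier)
      = (if (0::real) \<in> B then pr M (\<lambda>w. Uv w \<noteq> Complier) else 0)"
    by (cases "(0::real) \<in> B") (simp_all add: pr_False)
  ultimately show ?thesis using a K_pos[of z] by (simp add: field_simps)
qed

end

lemma K_id: "ivm M1 \<Longrightarrow> ivm M2 \<Longrightarrow> ivm2 M1 \<Longrightarrow> ivm2 M2 \<Longrightarrow> obs_law M1 = obs_law M2 \<Longrightarrow>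
   pr M1 (\<lambda>w. RDv w \<and> Zv w = z) = pr M2 (\<lambda>w. RDv w \<and> Zv w = z)"
  using ivm2.K_obs obs_id[of M1 M2 UNIV z "{True}" UNIV UNIV] by simp

lemma pc_id: "ivm M1 \<Longrightarrow> ivm M2 \<Longrightarrow> ivm2 M1 \<Longrightarrow> ivm2 M2 \<Longrightarrow> obs_law M1 = obs_law M2 \<Longrightarrow>
   pr M1 (\<lambda>w. Uv w = Complier) = pr M2 (\<lambda>w. Uv w = Complier)"
  using ivm2.pc_obs[of M1] ivm2.pc_obs[of M2] obs_id[of M1 M2 UNIV True "{True}" "{True}" UNIV]
    obs_id[of M1 M2 UNIV True "{True}" UNIV UNIV] obs_id[of M1 M2 UNIV False "{True}" "{True}" UNIV]
    obs_id[of M1 M2 UNIV False "{True}" UNIV UNIV] by simp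

lemma CACE_by_Y:
  assumes i1: "ivm2 M1" and i2: "ivm2 M2" and o: "obs_law M1 = obs_law M2"
    and eq: "\<And>z B. B \<in> sets borel \<Longrightarrow> pr M1 (\<lambda>w. Yv w \<in> B \<and> Zv w = z \<and> RDv w) = pr M2 (\<lambda>w. Yv w \<in> B \<and> Zv w = z \<and> RDv w)"
  shows "CACE M1 = CACE M2"
proof -
  interpret A: ivm2 M1 by fact
  interpret B: ivm2 M2 by fact
  have j1: "ivm M1" "ivm M2" by unfold_locales
  have Kid: "\<And>z. pr M1 (\<lambda>w. RDv w \<and> Zv w = z) = pr M2 (\<lambda>w. RDv w \<and> Zv w = z)"
    using K_id[OF j1 i1 i2 o] .
  have "\<And>z B. B \<in> sets borel \<Longrightarrow> pr M1 (\<lambda>w. (if z then Y1v w else Y0v w) \<in> B) = pr M2 (\<lambda>w. (if z then Y1v w else Y0v w) \<in> B)"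
    using A.Yz_pr B.Yz_pr eq Kid by simp
  from this[of _ True] this[of _ False]
  have "integral\<^sup>L M1 Y1v = integral\<^sup>L M2 Y1v" "integral\<^sup>L M1 Y0v = integral\<^sup>L M2 Y0v"
    by (auto intro!: int_ident[OF j1])
  then show ?thesis using A.CACE_Y B.CACE_Y pc_id[OF j1 i1 i2 o] by simp
qed

lemma CACE_by_X:
  assumes i1: "ivm2 M1" and i2: "ivm2 M2" and o: "obs_law M1 = obs_law M2"
    and eq: "\<And>z B. B \<in> sets borel \<Longrightarrow> pr M1 (\<lambda>w. Yv w \<in> B \<and> Uv w = Complier \<and> Zv w = z \<and> RDv w)
       = pr M2 (\<lambda>w. Yv w \<in> B \<and> Uv w = Complier \<and> Zv w = z \<and> RDv w)"
  shows "CACE M1 = CACE M2"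
proof -
  interpret A: ivm2 M1 by fact
  interpret B: ivm2 M2 by fact
  have j1: "ivm M1" "ivm M2" by unfold_locales
  have Kid: "\<And>z. pr M1 (\<lambda>w. RDv w \<and> Zv w = z) = pr M2 (\<lambda>w. RDv w \<and> Zv w = z)"
    using K_id[OF j1 i1 i2 o] .
  have pc: "pr M1 (\<lambda>w. Uv w = Complier) = pr M2 (\<lambda>w. Uv w = Complier)" by (rule pc_id[OF j1 i1 i2 o])
  have nc1: "pr M1 (\<lambda>w. Uv w \<noteq> Complier) = 1 - pr M1 (\<lambda>w. Uv w = Complier)"
    using A.pr_add[of "\<lambda>w. True" "\<lambda>w. Uv w = Complier"] A.pr_True by simp
  have nc2: "pr M2 (\<lambda>w. Uv w \<noteq> Complier) = 1 - pr M2 (\<lambda>w. Uv w = Complier)"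
    using B.pr_add[of "\<lambda>w. True" "\<lambda>w. Uv w = Complier"] B.pr_True by simp
  have "\<And>z B. B \<in> sets borel \<Longrightarrow> pr M1 (\<lambda>w. (if Uv w = Complier then (if z then Y1v w else Y0v w) else 0) \<in> B)
      = pr M2 (\<lambda>w. (if Uv w = Complier then (if z then Y1v w else Y0v w) else 0) \<in> B)"
    using A.Xz_pr B.Xz_pr eq Kid pc nc1 nc2 by simp
  note xx = this
  have x1: "\<And>B. B \<in> sets borel \<Longrightarrow> pr M1 (\<lambda>w. (if Uv w = Complier then Y1v w else 0) \<in> B)
      = pr M2 (\<lambda>w. (if Uv w = Complier then Y1v w else 0) \<in> B)"
  proof -
    fix B :: "real set" assume B: "B \<in> sets borel"
    show "?thesis B"
      using A.Xz_pr[OF B, where z=True, unfolded if_True] B.Xz_pr[OF B, where z=True, unfolded if_True] eq[OF B, of True] Kid[of True] pc nc1 nc2 by simp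
  qed
  have x0: "\<And>B. B \<in> sets borel \<Longrightarrow> pr M1 (\<lambda>w. (if Uv w = Complier then Y0v w else 0) \<in> B)
      = pr M2 (\<lambda>w. (if Uv w = Complier then Y0v w else 0) \<in> B)"
  proof -
    fix B :: "real set" assume B: "B \<in> sets borel"
    show "?thesis B"
      using A.Xz_pr[OF B, where z=False, unfolded if_False] B.Xz_pr[OF B, where z=False, unfolded if_False] eq[OF B, of False] Kid[of False] pc nc1 nc2 by simp
  qed
  have "integral\<^sup>L M1 (\<lambda>w. if Uv w = Complier then Y1v w else 0) = integral\<^sup>L M2 (\<lambda>w. if Uv w = Complier then Y1v w else 0)"
  proof (rule int_ident[OF j1])
    show "(\<lambda>w. if Uv w = Complier then Y1v w else 0) \<in> borel_measurable borel" by measurable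
  qed (rule x1)
  moreover have "integral\<^sup>L M1 (\<lambda>w. if Uv w = Complier then Y0v w else 0) = integral\<^sup>L M2 (\<lambda>w. if Uv w = Complier then Y0v w else 0)"
  proof (rule int_ident[OF j1])
    show "(\<lambda>w. if Uv w = Complier then Y0v w else 0) \<in> borel_measurable borel" by measurable
  qed (rule x0)
  ultimately
  show ?thesis using A.CACE_X B.CACE_X pc by simp
qed

lemma binary_AE: "binary_Y M \<Longrightarrow> AE w in M. (if z then Y1v w else Y0v w) \<in> {0, 1}"
  unfolding binary_Y_def by (rule AE_mp) (rule AE_I2, auto)

lemma CACE_by_bin:
  assumes i1: "ivm2 M1" and i2: "ivm2 M2" and o: "obs_law M1 = obs_law M2"
    and b1: "binary_Y M1" and b2: "binary_Y M2"
    and eq: "\<And>z. pr M1 (\<lambda>w. Yv w = 1 \<and> Zv w = z \<and> RDv w) = pr M2 (\<lambda>w. Yv w = 1 \<and> Zv w = z \<and> RDv w)"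
  shows "CACE M1 = CACE M2"
proof -
  interpret A: ivm2 M1 by fact
  interpret B: ivm2 M2 by fact
  have j1: "ivm M1" "ivm M2" by unfold_locales
  have Kid: "\<And>z. pr M1 (\<lambda>w. RDv w \<and> Zv w = z) = pr M2 (\<lambda>w. RDv w \<and> Zv w = z)"
    using K_id[OF j1 i1 i2 o] .
  have e: "\<And>z. pr M1 (\<lambda>w. (if z then Y1v w else Y0v w) \<in> {1}) = pr M2 (\<lambda>w. (if z then Y1v w else Y0v w) \<in> {1})"
    using A.Yz_pr[of "{1}"] B.Yz_pr[of "{1}"] eq Kid by simp
  have "integral\<^sup>L M1 Y1v = pr M1 (\<lambda>w. Y1v w = 1)"
    using A.int_binary[OF Y1v_meas] binary_AE[OF b1, of True] by simp
  moreover have "integral\<^sup>L M2 Y1v = pr M2 (\<lambda>w. Y1v w = 1)"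
    using B.int_binary[OF Y1v_meas] binary_AE[OF b2, of True] by simp
  moreover have "integral\<^sup>L M1 Y0v = pr M1 (\<lambda>w. Y0v w = 1)"
    using A.int_binary[OF Y0v_meas] binary_AE[OF b1, of False] by simp
  moreover have "integral\<^sup>L M2 Y0v = pr M2 (\<lambda>w. Y0v w = 1)"
    using B.int_binary[OF Y0v_meas] binary_AE[OF b2, of False] by simp
  ultimately show ?thesis using A.CACE_Y B.CACE_Y pc_id[OF j1 i1 i2 o] e[of True] e[of False] by simp
qed


lemma ivm2I: "iv_model M \<Longrightarrow> RD_2Z M \<Longrightarrow> ivm2 M"
  by (simp add: ivm2_def ivm2_axioms_def ivm_def)

locale ZD = ivm2 +
  assumes ci: "cindep M RYv (\<lambda>w. (Uv w, Yv w)) (\<lambda>w. (Zv w, Dv w, RDv w))"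
    and pos: "\<And>z d. cpr M RYv (\<lambda>w. Zv w = z \<and> Dv w = d \<and> RDv w) > 0"
begin

lemma cell:
  assumes [measurable]: "B \<in> sets borel"
  shows "pr M (\<lambda>w. Yv w \<in> B \<and> Zv w = z \<and> Dv w = d \<and> RDv w) =
    pr M (oP z {True} {d} {True} B) * pr M (oP z {True} {d} UNIV UNIV) / pr M (oP z {True} {d} {True} UNIV)"
proof -
  have "Measurable.pred borel (\<lambda>w. (Uv w, Yv w) \<in> UNIV \<times> B)" by measurable
  from cindep_bool[OF ci RYv_meas this, of "(z, d, True)"]
  have c: "pr M (\<lambda>w. RYv w \<and> (Uv w, Yv w) \<in> UNIV \<times> B \<and> (Zv w, Dv w, RDv w) = (z, d, True)) * pr M (\<lambda>w. (Zv w, Dv w, RDv w) = (z, d, True))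
    = pr M (\<lambda>w. RYv w \<and> (Zv w, Dv w, RDv w) = (z, d, True)) * pr M (\<lambda>w. (Uv w, Yv w) \<in> UNIV \<times> B \<and> (Zv w, Dv w, RDv w) = (z, d, True))" .
  have e1: "pr M (\<lambda>w. RYv w \<and> (Uv w, Yv w) \<in> UNIV \<times> B \<and> (Zv w, Dv w, RDv w) = (z, d, True)) = pr M (oP z {True} {d} {True} B)"
    by (rule pr_cong) (auto simp: oP_iff)
  have e2: "pr M (\<lambda>w. (Zv w, Dv w, RDv w) = (z, d, True)) = pr M (oP z {True} {d} UNIV UNIV)"
    by (rule pr_cong) (auto simp: oP_iff)
  have e3: "pr M (\<lambda>w. RYv w \<and> (Zv w, Dv w, RDv w) = (z, d, True)) = pr M (oP z {True} {d} {True} UNIV)"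
    by (rule pr_cong) (auto simp: oP_iff)
  have e4: "pr M (\<lambda>w. (Uv w, Yv w) \<in> UNIV \<times> B \<and> (Zv w, Dv w, RDv w) = (z, d, True)) = pr M (\<lambda>w. Yv w \<in> B \<and> Zv w = z \<and> Dv w = d \<and> RDv w)"
    by (rule pr_cong) auto
  have "pr M (\<lambda>w. RYv w \<and> (Zv w = z \<and> Dv w = d \<and> RDv w)) > 0" using cpr_pos[OF pos[of z d]] by simp
  moreover have "pr M (\<lambda>w. RYv w \<and> (Zv w = z \<and> Dv w = d \<and> RDv w)) = pr M (oP z {True} {d} {True} UNIV)"
    by (rule pr_cong) (auto simp: oP_iff)
  ultimately have p: "pr M (oP z {True} {d} {True} UNIV) > 0" by simp
  from c e1 e2 e3 e4 p show ?thesis by (simp add: field_simps)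
qed

lemma formula:
  assumes [measurable]: "B \<in> sets borel"
  shows "pr M (\<lambda>w. Yv w \<in> B \<and> Zv w = z \<and> RDv w) =
    pr M (oP z {True} {True} {True} B) * pr M (oP z {True} {True} UNIV UNIV) / pr M (oP z {True} {True} {True} UNIV)
  + pr M (oP z {True} {False} {True} B) * pr M (oP z {True} {False} UNIV UNIV) / pr M (oP z {True} {False} {True} UNIV)"
proof -
  have "pr M (\<lambda>w. (Yv w \<in> B \<and> Zv w = z \<and> RDv w) \<and> Dv w) + pr M (\<lambda>w. (Yv w \<in> B \<and> Zv w = z \<and> RDv w) \<and> \<not> Dv w)
     = pr M (\<lambda>w. Yv w \<in> B \<and> Zv w = z \<and> RDv w)"
    by (rule pr_add) measurable
  moreover have "pr M (\<lambda>w. (Yv w \<in> B \<and> Zv w = z \<and> RDv w) \<and> Dv w) = pr M (\<lambda>w. Yv w \<in> B \<and> Zv w = z \<and> Dv w = True \<and> RDv w)"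
    by (rule pr_cong) auto
  moreover have "pr M (\<lambda>w. (Yv w \<in> B \<and> Zv w = z \<and> RDv w) \<and> \<not> Dv w) = pr M (\<lambda>w. Yv w \<in> B \<and> Zv w = z \<and> Dv w = False \<and> RDv w)"
    by (rule pr_cong) auto
  ultimately show ?thesis using cell[of B z True] cell[of B z False] by simp
qed

end

theorem ident_1ZD: "CACE_identifiable model_1ZD"
  unfolding CACE_identifiable_def
proof (intro allI impI)
  fix M1 M2 assume m1: "model_1ZD M1" and m2: "model_1ZD M2" and o: "obs_law M1 = obs_law M2"
  have z1: "ZD M1" using m1 unfolding model_1ZD_def by (auto simp: ZD_def ZD_axioms_def intro: ivm2I)
  have z2: "ZD M2" using m2 unfolding model_1ZD_def by (auto simp: ZD_def ZD_axioms_def intro: ivm2I)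
  interpret A: ZD M1 by (rule z1)
  interpret B: ZD M2 by (rule z2)
  have j: "ivm M1" "ivm M2" by unfold_locales
  show "CACE M1 = CACE M2"
  proof (rule CACE_by_Y)
    show "ivm2 M1" "ivm2 M2" by unfold_locales
    show "obs_law M1 = obs_law M2" by (rule o)
    fix z B assume B: "(B::real set) \<in> sets borel"
    show "pr M1 (\<lambda>w. Yv w \<in> B \<and> Zv w = z \<and> RDv w) = pr M2 (\<lambda>w. Yv w \<in> B \<and> Zv w = z \<and> RDv w)"
      unfolding A.formula[OF B] B.formula[OF B] using obs_id[OF j o] B by simp
  qed
qed


lemma rank1_alg:
  fixes a b c d :: real
  assumes h: "a * d = b * c"
  shows "((if p0 \<and> qT then a else 0) + (if p0 \<and> qF then b else 0) + (if p1 \<and> qT then c else 0) + (if p1 \<and> qF then d else 0))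
     * (a + b + c + d)
   = ((if p0 then a + b else 0) + (if p1 then c + d else 0)) * ((if qT then a + c else 0) + (if qF then b + d else 0))"
  using h by (cases p0; cases p1; cases qT; cases qF) (simp_all add: algebra_simps)

context ivm begin

lemma ev_pred: "ev M P \<in> sets M \<Longrightarrow> Measurable.pred borel P"
  unfolding ev_eq sets_M[symmetric] pred_def by (simp add: space_M)

lemma pr_if: "pr M (\<lambda>w. c \<and> Q w) = (if c then pr M Q else 0)"
  by (cases c) (simp_all add: pr_False)

lemma pr_split4:
  assumes ae: "AE w in M. Yv w \<in> {0, 1}" and [measurable]: "Measurable.pred borel P" "Measurable.pred borel X"
  shows "pr M P = pr M (\<lambda>w. P w \<and> Yv w = 0 \<and> X w) + pr M (\<lambda>w. P w \<and> Yv w = 0 \<and> \<not> X w)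
     + pr M (\<lambda>w. P w \<and> Yv w = 1 \<and> X w) + pr M (\<lambda>w. P w \<and> Yv w = 1 \<and> \<not> X w)"
proof -
  have a1: "pr M (\<lambda>w. P w \<and> Yv w = 1) + pr M (\<lambda>w. P w \<and> \<not> Yv w = 1) = pr M P"
    by (rule pr_add) measurable
  have "AE w in M. (P w \<and> \<not> Yv w = 1) \<longleftrightarrow> (P w \<and> Yv w = 0)"
    using ae by (rule AE_mp) (rule AE_I2, auto)
  then have a2: "pr M (\<lambda>w. P w \<and> \<not> Yv w = 1) = pr M (\<lambda>w. P w \<and> Yv w = 0)"
    by (rule pr_AE) measurable
  have a3: "pr M (\<lambda>w. (P w \<and> Yv w = 0) \<and> X w) + pr M (\<lambda>w. (P w \<and> Yv w = 0) \<and> \<not> X w) = pr M (\<lambda>w. P w \<and> Yv w = 0)"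
    by (rule pr_add) measurable
  have a4: "pr M (\<lambda>w. (P w \<and> Yv w = 1) \<and> X w) + pr M (\<lambda>w. (P w \<and> Yv w = 1) \<and> \<not> X w) = pr M (\<lambda>w. P w \<and> Yv w = 1)"
    by (rule pr_add) measurable
  show ?thesis using a1 a2 a3 a4 by (simp add: conj_assoc)
qed

lemma cindep_rank1:
  assumes ae: "AE w in M. Yv w \<in> {0, 1}" and [measurable]: "Measurable.pred borel E" "Measurable.pred borel X"
    and h: "pr M (\<lambda>w. E w \<and> Yv w = 0 \<and> X w) * pr M (\<lambda>w. E w \<and> Yv w = 1 \<and> \<not> X w)
         = pr M (\<lambda>w. E w \<and> Yv w = 0 \<and> \<not> X w) * pr M (\<lambda>w. E w \<and> Yv w = 1 \<and> X w)"
  shows "cindep_on M Yv X E"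
  unfolding cindep_on_def
proof (intro allI impI)
  fix A B assume eA: "ev M (\<lambda>w. Yv w \<in> A) \<in> sets M" and eB: "ev M (\<lambda>w. X w \<in> B) \<in> sets M"
  have [measurable]: "Measurable.pred borel (\<lambda>w. Yv w \<in> A)" by (rule ev_pred[OF eA])
  have [measurable]: "Measurable.pred borel (\<lambda>w. X w \<in> B)" by (rule ev_pred[OF eB])
  define a where "a = pr M (\<lambda>w. E w \<and> Yv w = 0 \<and> X w)"
  define b where "b = pr M (\<lambda>w. E w \<and> Yv w = 0 \<and> \<not> X w)"
  define c where "c = pr M (\<lambda>w. E w \<and> Yv w = 1 \<and> X w)"
  define d where "d = pr M (\<lambda>w. E w \<and> Yv w = 1 \<and> \<not> X w)"
  have s1: "pr M (\<lambda>w. Yv w \<in> A \<and> X w \<in> B \<and> E w) = (if 0 \<in> A \<and> True \<in> B then a else 0) + (if 0 \<in> A \<and> False \<in> B then b else 0)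
      + (if 1 \<in> A \<and> True \<in> B then c else 0) + (if 1 \<in> A \<and> False \<in> B then d else 0)"
  proof -
    have "pr M (\<lambda>w. Yv w \<in> A \<and> X w \<in> B \<and> E w) = pr M (\<lambda>w. (Yv w \<in> A \<and> X w \<in> B \<and> E w) \<and> Yv w = 0 \<and> X w) + pr M (\<lambda>w. (Yv w \<in> A \<and> X w \<in> B \<and> E w) \<and> Yv w = 0 \<and> \<not> X w)
     + pr M (\<lambda>w. (Yv w \<in> A \<and> X w \<in> B \<and> E w) \<and> Yv w = 1 \<and> X w) + pr M (\<lambda>w. (Yv w \<in> A \<and> X w \<in> B \<and> E w) \<and> Yv w = 1 \<and> \<not> X w)"
      by (rule pr_split4[OF ae]) measurable
    moreover have "pr M (\<lambda>w. (Yv w \<in> A \<and> X w \<in> B \<and> E w) \<and> Yv w = 0 \<and> X w) = pr M (\<lambda>w. (0 \<in> A \<and> True \<in> B) \<and> (E w \<and> Yv w = 0 \<and> X w))"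
      by (rule pr_cong) auto
    moreover have "pr M (\<lambda>w. (Yv w \<in> A \<and> X w \<in> B \<and> E w) \<and> Yv w = 0 \<and> \<not> X w) = pr M (\<lambda>w. (0 \<in> A \<and> False \<in> B) \<and> (E w \<and> Yv w = 0 \<and> \<not> X w))"
      by (rule pr_cong) auto
    moreover have "pr M (\<lambda>w. (Yv w \<in> A \<and> X w \<in> B \<and> E w) \<and> Yv w = 1 \<and> X w) = pr M (\<lambda>w. (1 \<in> A \<and> True \<in> B) \<and> (E w \<and> Yv w = 1 \<and> X w))"
      by (rule pr_cong) auto
    moreover have "pr M (\<lambda>w. (Yv w \<in> A \<and> X w \<in> B \<and> E w) \<and> Yv w = 1 \<and> \<not> X w) = pr M (\<lambda>w. (1 \<in> A \<and> False \<in> B) \<and> (E w \<and> Yv w = 1 \<and> \<not> X w))"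
      by (rule pr_cong) auto
    ultimately show ?thesis unfolding pr_if a_def b_def c_def d_def by simp
  qed
  have s2: "pr M (\<lambda>w. Yv w \<in> A \<and> E w) = (if 0 \<in> A then a + b else 0) + (if 1 \<in> A then c + d else 0)"
  proof -
    have "pr M (\<lambda>w. Yv w \<in> A \<and> E w) = pr M (\<lambda>w. (Yv w \<in> A \<and> E w) \<and> Yv w = 0 \<and> X w) + pr M (\<lambda>w. (Yv w \<in> A \<and> E w) \<and> Yv w = 0 \<and> \<not> X w)
     + pr M (\<lambda>w. (Yv w \<in> A \<and> E w) \<and> Yv w = 1 \<and> X w) + pr M (\<lambda>w. (Yv w \<in> A \<and> E w) \<and> Yv w = 1 \<and> \<not> X w)"
      by (rule pr_split4[OF ae]) measurable
    moreover have "pr M (\<lambda>w. (Yv w \<in> A \<and> E w) \<and> Yv w = 0 \<and> X w) = pr M (\<lambda>w. (0 \<in> A) \<and> (E w \<and> Yv w = 0 \<and> X w))"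
      by (rule pr_cong) auto
    moreover have "pr M (\<lambda>w. (Yv w \<in> A \<and> E w) \<and> Yv w = 0 \<and> \<not> X w) = pr M (\<lambda>w. (0 \<in> A) \<and> (E w \<and> Yv w = 0 \<and> \<not> X w))"
      by (rule pr_cong) auto
    moreover have "pr M (\<lambda>w. (Yv w \<in> A \<and> E w) \<and> Yv w = 1 \<and> X w) = pr M (\<lambda>w. (1 \<in> A) \<and> (E w \<and> Yv w = 1 \<and> X w))"
      by (rule pr_cong) auto
    moreover have "pr M (\<lambda>w. (Yv w \<in> A \<and> E w) \<and> Yv w = 1 \<and> \<not> X w) = pr M (\<lambda>w. (1 \<in> A) \<and> (E w \<and> Yv w = 1 \<and> \<not> X w))"
      by (rule pr_cong) auto
    ultimately show ?thesis unfolding pr_if a_def b_def c_def d_def by simp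
  qed
  have s3: "pr M (\<lambda>w. X w \<in> B \<and> E w) = (if True \<in> B then a + c else 0) + (if False \<in> B then b + d else 0)"
  proof -
    have "pr M (\<lambda>w. X w \<in> B \<and> E w) = pr M (\<lambda>w. (X w \<in> B \<and> E w) \<and> Yv w = 0 \<and> X w) + pr M (\<lambda>w. (X w \<in> B \<and> E w) \<and> Yv w = 0 \<and> \<not> X w)
     + pr M (\<lambda>w. (X w \<in> B \<and> E w) \<and> Yv w = 1 \<and> X w) + pr M (\<lambda>w. (X w \<in> B \<and> E w) \<and> Yv w = 1 \<and> \<not> X w)"
      by (rule pr_split4[OF ae]) measurable
    moreover have "pr M (\<lambda>w. (X w \<in> B \<and> E w) \<and> Yv w = 0 \<and> X w) = pr M (\<lambda>w. (True \<in> B) \<and> (E w \<and> Yv w = 0 \<and> X w))"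
      by (rule pr_cong) auto
    moreover have "pr M (\<lambda>w. (X w \<in> B \<and> E w) \<and> Yv w = 0 \<and> \<not> X w) = pr M (\<lambda>w. (False \<in> B) \<and> (E w \<and> Yv w = 0 \<and> \<not> X w))"
      by (rule pr_cong) auto
    moreover have "pr M (\<lambda>w. (X w \<in> B \<and> E w) \<and> Yv w = 1 \<and> X w) = pr M (\<lambda>w. (True \<in> B) \<and> (E w \<and> Yv w = 1 \<and> X w))"
      by (rule pr_cong) auto
    moreover have "pr M (\<lambda>w. (X w \<in> B \<and> E w) \<and> Yv w = 1 \<and> \<not> X w) = pr M (\<lambda>w. (False \<in> B) \<and> (E w \<and> Yv w = 1 \<and> \<not> X w))"
      by (rule pr_cong) auto
    ultimately show ?thesis unfolding pr_if a_def b_def c_def d_def by simp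
  qed
  have s4: "pr M E = a + b + c + d"
    unfolding a_def b_def c_def d_def by (rule pr_split4[OF ae]) measurable
  have h': "a * d = b * c" using h unfolding a_def b_def c_def d_def by simp
  show "pr M (\<lambda>w. Yv w \<in> A \<and> X w \<in> B \<and> E w) * pr M E = pr M (\<lambda>w. Yv w \<in> A \<and> E w) * pr M (\<lambda>w. X w \<in> B \<and> E w)"
    unfolding s1 s2 s3 s4 by (rule rank1_alg[OF h'])
qed

end

lemma binary_AE_Y: "binary_Y M \<Longrightarrow> AE w in M. Yv w \<in> {0, 1}"
  unfolding binary_Y_def by (rule AE_mp) (rule AE_I2, auto simp: Yv_def)


lemma cramer:
  fixes oF0 oT0 oF1 oT1 e0 e1 r0 r1 pF0 pT0 pF1 pT1 mF mT :: real
  assumes h1: "oF0 * e0 = r0 * pF0" "oT0 * e0 = r0 * pT0" "oF1 * e1 = r1 * pF1" "oT1 * e1 = r1 * pT1"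
    and pos: "e0 > 0" "e1 > 0" "r0 > 0" "r1 > 0"
    and m: "mF = pF0 + pF1" "mT = pT0 + pT1"
    and dt: "pF0 * pT1 \<noteq> pF1 * pT0"
  shows "pF1 = oF1 * (oF0 * mT - oT0 * mF) / (oF0 * oT1 - oF1 * oT0)"
    and "pT1 = oT1 * (oF0 * mT - oT0 * mF) / (oF0 * oT1 - oF1 * oT0)"
proof -
  define k0 where "k0 = r0 / e0"
  define k1 where "k1 = r1 / e1"
  have k0: "k0 > 0" and k1: "k1 > 0" using pos by (simp_all add: k0_def k1_def)
  have o: "oF0 = k0 * pF0" "oT0 = k0 * pT0" "oF1 = k1 * pF1" "oT1 = k1 * pT1"
    using h1 pos by (simp_all add: k0_def k1_def field_simps)
  have N: "oF0 * mT - oT0 * mF = k0 * (pF0 * pT1 - pF1 * pT0)"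
    unfolding o m by (simp add: algebra_simps)
  have Dt: "oF0 * oT1 - oF1 * oT0 = k0 * k1 * (pF0 * pT1 - pF1 * pT0)"
    unfolding o by (simp add: algebra_simps)
  have nz: "pF0 * pT1 - pF1 * pT0 \<noteq> 0" using dt by simp
  show "pF1 = oF1 * (oF0 * mT - oT0 * mF) / (oF0 * oT1 - oF1 * oT0)"
    unfolding N Dt using k0 k1 nz by (simp add: o field_simps)
  show "pT1 = oT1 * (oF0 * mT - oT0 * mF) / (oF0 * oT1 - oF1 * oT0)"
    unfolding N Dt using k0 k1 nz by (simp add: o field_simps)
qed


lemma sing_borel: "{x::real} \<in> sets borel" by simp

definition crm :: "unit_data measure \<Rightarrow> bool \<Rightarrow> bool \<Rightarrow> real" where
 "crm M d x = pr M (oP x {True} {d} {True} {1}) * (pr M (oP False {True} {d} {True} {0}) * pr M (oP True {True} {d} UNIV UNIV)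
     - pr M (oP True {True} {d} {True} {0}) * pr M (oP False {True} {d} UNIV UNIV))
   / (pr M (oP False {True} {d} {True} {0}) * pr M (oP True {True} {d} {True} {1})
     - pr M (oP False {True} {d} {True} {1}) * pr M (oP True {True} {d} {True} {0}))"

lemma crm_id: "ivm M1 \<Longrightarrow> ivm M2 \<Longrightarrow> obs_law M1 = obs_law M2 \<Longrightarrow> crm M1 d x = crm M2 d x"
  unfolding crm_def using obs_id[of M1 M2 "{1}"] obs_id[of M1 M2 "{0}"] obs_id[of M1 M2 UNIV] sing_borel by simp

context ivm begin
lemma pr_split_Y:
  assumes ae: "AE w in M. Yv w \<in> {0, 1}" and [measurable]: "Measurable.pred borel P"
  shows "pr M P = pr M (\<lambda>w. P w \<and> Yv w = 0) + pr M (\<lambda>w. P w \<and> Yv w = 1)"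
proof -
  have a1: "pr M (\<lambda>w. P w \<and> Yv w = 1) + pr M (\<lambda>w. P w \<and> \<not> Yv w = 1) = pr M P"
    by (rule pr_add) measurable
  have "AE w in M. (P w \<and> \<not> Yv w = 1) \<longleftrightarrow> (P w \<and> Yv w = 0)"
    using ae by (rule AE_mp) (rule AE_I2, auto)
  then have a2: "pr M (\<lambda>w. P w \<and> \<not> Yv w = 1) = pr M (\<lambda>w. P w \<and> Yv w = 0)"
    by (rule pr_AE) measurable
  show ?thesis using a1 a2 by simp
qed
end

locale DY = ivm2 +
  assumes bin: "binary_Y M"
    and ci: "cindep M RYv (\<lambda>w. (Zv w, Uv w)) (\<lambda>w. (Dv w, Yv w, RDv w))"
    and pos: "\<And>d y. y \<in> {0, 1} \<Longrightarrow> cpr M RYv (\<lambda>w. Dv w = d \<and> Yv w = y \<and> RDv w) > 0"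
    and dep: "\<And>d. \<not> cindep_on M Yv Zv (\<lambda>w. Dv w = d \<and> RDv w)"
begin

lemma cellDY:
  "pr M (oP z {True} {d} {True} {y}) * pr M (\<lambda>w. Dv w = d \<and> Yv w = y \<and> RDv w)
   = pr M (\<lambda>w. RYv w \<and> Dv w = d \<and> Yv w = y \<and> RDv w) * pr M (\<lambda>w. Zv w = z \<and> Dv w = d \<and> Yv w = y \<and> RDv w)"
proof -
  have "Measurable.pred borel (\<lambda>w. (Zv w, Uv w) \<in> {z} \<times> UNIV)" by measurable
  from cindep_bool[OF ci RYv_meas this, of "(d, y, True)"]
  have c: "pr M (\<lambda>w. RYv w \<and> (Zv w, Uv w) \<in> {z} \<times> UNIV \<and> (Dv w, Yv w, RDv w) = (d, y, True)) * pr M (\<lambda>w. (Dv w, Yv w, RDv w) = (d, y, True))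
    = pr M (\<lambda>w. RYv w \<and> (Dv w, Yv w, RDv w) = (d, y, True)) * pr M (\<lambda>w. (Zv w, Uv w) \<in> {z} \<times> UNIV \<and> (Dv w, Yv w, RDv w) = (d, y, True))" .
  have e1: "pr M (\<lambda>w. RYv w \<and> (Zv w, Uv w) \<in> {z} \<times> UNIV \<and> (Dv w, Yv w, RDv w) = (d, y, True)) = pr M (oP z {True} {d} {True} {y})"
    by (rule pr_cong) (auto simp: oP_iff)
  have e2: "pr M (\<lambda>w. (Dv w, Yv w, RDv w) = (d, y, True)) = pr M (\<lambda>w. Dv w = d \<and> Yv w = y \<and> RDv w)"
    by (rule pr_cong) auto
  have e3: "pr M (\<lambda>w. RYv w \<and> (Dv w, Yv w, RDv w) = (d, y, True)) = pr M (\<lambda>w. RYv w \<and> Dv w = d \<and> Yv w = y \<and> RDv w)"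
    by (rule pr_cong) auto
  have e4: "pr M (\<lambda>w. (Zv w, Uv w) \<in> {z} \<times> UNIV \<and> (Dv w, Yv w, RDv w) = (d, y, True)) = pr M (\<lambda>w. Zv w = z \<and> Dv w = d \<and> Yv w = y \<and> RDv w)"
    by (rule pr_cong) auto
  show ?thesis using c e1 e2 e3 e4 by simp
qed

lemma mDY: "pr M (oP z {True} {d} UNIV UNIV) = pr M (\<lambda>w. Zv w = z \<and> Dv w = d \<and> Yv w = 0 \<and> RDv w) + pr M (\<lambda>w. Zv w = z \<and> Dv w = d \<and> Yv w = 1 \<and> RDv w)"
proof -
  have "pr M (oP z {True} {d} UNIV UNIV) = pr M (\<lambda>w. Zv w = z \<and> Dv w = d \<and> RDv w)"
    by (rule pr_cong) (auto simp: oP_iff)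
  also have "\<dots> = pr M (\<lambda>w. (Zv w = z \<and> Dv w = d \<and> RDv w) \<and> Yv w = 0) + pr M (\<lambda>w. (Zv w = z \<and> Dv w = d \<and> RDv w) \<and> Yv w = 1)"
    by (rule pr_split_Y[OF binary_AE_Y[OF bin]]) measurable
  also have "\<dots> = pr M (\<lambda>w. Zv w = z \<and> Dv w = d \<and> Yv w = 0 \<and> RDv w) + pr M (\<lambda>w. Zv w = z \<and> Dv w = d \<and> Yv w = 1 \<and> RDv w)"
    by (intro arg_cong2[where f="(+)"] pr_cong) auto
  finally show ?thesis .
qed

lemma detDY: "pr M (\<lambda>w. Zv w = False \<and> Dv w = d \<and> Yv w = 0 \<and> RDv w) * pr M (\<lambda>w. Zv w = True \<and> Dv w = d \<and> Yv w = 1 \<and> RDv w)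
   \<noteq> pr M (\<lambda>w. Zv w = False \<and> Dv w = d \<and> Yv w = 1 \<and> RDv w) * pr M (\<lambda>w. Zv w = True \<and> Dv w = d \<and> Yv w = 0 \<and> RDv w)"
proof
  assume h: "pr M (\<lambda>w. Zv w = False \<and> Dv w = d \<and> Yv w = 0 \<and> RDv w) * pr M (\<lambda>w. Zv w = True \<and> Dv w = d \<and> Yv w = 1 \<and> RDv w)
   = pr M (\<lambda>w. Zv w = False \<and> Dv w = d \<and> Yv w = 1 \<and> RDv w) * pr M (\<lambda>w. Zv w = True \<and> Dv w = d \<and> Yv w = 0 \<and> RDv w)"
  have "cindep_on M Yv Zv (\<lambda>w. Dv w = d \<and> RDv w)"
  proof (rule cindep_rank1[OF binary_AE_Y[OF bin]])
    show "Measurable.pred borel (\<lambda>w. Dv w = d \<and> RDv w)" by measurable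
    show "Measurable.pred borel Zv" by measurable
    have q1: "pr M (\<lambda>w. (Dv w = d \<and> RDv w) \<and> Yv w = 0 \<and> Zv w) = pr M (\<lambda>w. Zv w = True \<and> Dv w = d \<and> Yv w = 0 \<and> RDv w)"
      by (rule pr_cong) auto
    have q2: "pr M (\<lambda>w. (Dv w = d \<and> RDv w) \<and> Yv w = 1 \<and> \<not> Zv w) = pr M (\<lambda>w. Zv w = False \<and> Dv w = d \<and> Yv w = 1 \<and> RDv w)"
      by (rule pr_cong) auto
    have q3: "pr M (\<lambda>w. (Dv w = d \<and> RDv w) \<and> Yv w = 0 \<and> \<not> Zv w) = pr M (\<lambda>w. Zv w = False \<and> Dv w = d \<and> Yv w = 0 \<and> RDv w)"
      by (rule pr_cong) auto
    have q4: "pr M (\<lambda>w. (Dv w = d \<and> RDv w) \<and> Yv w = 1 \<and> Zv w) = pr M (\<lambda>w. Zv w = True \<and> Dv w = d \<and> Yv w = 1 \<and> RDv w)"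
      by (rule pr_cong) auto
    show "pr M (\<lambda>w. (Dv w = d \<and> RDv w) \<and> Yv w = 0 \<and> Zv w) * pr M (\<lambda>w. (Dv w = d \<and> RDv w) \<and> Yv w = 1 \<and> \<not> Zv w)
       = pr M (\<lambda>w. (Dv w = d \<and> RDv w) \<and> Yv w = 0 \<and> \<not> Zv w) * pr M (\<lambda>w. (Dv w = d \<and> RDv w) \<and> Yv w = 1 \<and> Zv w)"
      unfolding q1 q2 q3 q4 using h by (simp add: mult.commute)
  qed
  then show False using dep by blast
qed

lemma p1DY: "pr M (\<lambda>w. Zv w = x \<and> Dv w = d \<and> Yv w = 1 \<and> RDv w) = crm M d x"
proof -
  have ps0: "pr M (\<lambda>w. RYv w \<and> Dv w = d \<and> Yv w = 0 \<and> RDv w) > 0" "pr M (\<lambda>w. Dv w = d \<and> Yv w = 0 \<and> RDv w) > 0"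
    using cpr_pos[OF pos[of 0 d]] by (simp_all add: conj_assoc)
  have ps1: "pr M (\<lambda>w. RYv w \<and> Dv w = d \<and> Yv w = 1 \<and> RDv w) > 0" "pr M (\<lambda>w. Dv w = d \<and> Yv w = 1 \<and> RDv w) > 0"
    using cpr_pos[OF pos[of 1 d]] by (simp_all add: conj_assoc)
  note cr = cramer[OF cellDY[of False d 0] cellDY[of True d 0] cellDY[of False d 1] cellDY[of True d 1]
      ps0(2) ps1(2) ps0(1) ps1(1) mDY[of False d] mDY[of True d] detDY[of d]]
  show ?thesis
  proof (cases x)
    case True then show ?thesis using cr(2) unfolding crm_def by simp
  next
    case False then show ?thesis using cr(1) unfolding crm_def by simp
  qed
qed

lemma formulaDY: "pr M (\<lambda>w. Yv w = 1 \<and> Zv w = z \<and> RDv w) = crm M True z + crm M False z"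
proof -
  have "pr M (\<lambda>w. (Yv w = 1 \<and> Zv w = z \<and> RDv w) \<and> Dv w) + pr M (\<lambda>w. (Yv w = 1 \<and> Zv w = z \<and> RDv w) \<and> \<not> Dv w)
     = pr M (\<lambda>w. Yv w = 1 \<and> Zv w = z \<and> RDv w)"
    by (rule pr_add) measurable
  moreover have "pr M (\<lambda>w. (Yv w = 1 \<and> Zv w = z \<and> RDv w) \<and> Dv w) = pr M (\<lambda>w. Zv w = z \<and> Dv w = True \<and> Yv w = 1 \<and> RDv w)"
    by (rule pr_cong) auto
  moreover have "pr M (\<lambda>w. (Yv w = 1 \<and> Zv w = z \<and> RDv w) \<and> \<not> Dv w) = pr M (\<lambda>w. Zv w = z \<and> Dv w = False \<and> Yv w = 1 \<and> RDv w)"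
    by (rule pr_cong) auto
  ultimately show ?thesis using p1DY[of z True] p1DY[of z False] by simp
qed

end

theorem ident_1DY: "CACE_identifiable model_1DY"
  unfolding CACE_identifiable_def
proof (intro allI impI)
  fix M1 M2 assume m1: "model_1DY M1" and m2: "model_1DY M2" and o: "obs_law M1 = obs_law M2"
  have z1: "DY M1" using m1 unfolding model_1DY_def by (auto simp: DY_def DY_axioms_def intro: ivm2I)
  have z2: "DY M2" using m2 unfolding model_1DY_def by (auto simp: DY_def DY_axioms_def intro: ivm2I)
  interpret A: DY M1 by (rule z1)
  interpret B: DY M2 by (rule z2)
  have j: "ivm M1" "ivm M2" by unfold_locales
  show "CACE M1 = CACE M2"
  proof (rule CACE_by_bin)
    show "ivm2 M1" "ivm2 M2" by unfold_locales
    show "obs_law M1 = obs_law M2" by (rule o)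
    show "binary_Y M1" "binary_Y M2" by (rule A.bin, rule B.bin)
    fix z
    show "pr M1 (\<lambda>w. Yv w = 1 \<and> Zv w = z \<and> RDv w) = pr M2 (\<lambda>w. Yv w = 1 \<and> Zv w = z \<and> RDv w)"
      unfolding A.formulaDY B.formulaDY using crm_id[OF j o] by simp
  qed
qed


definition crm2 :: "unit_data measure \<Rightarrow> bool \<Rightarrow> bool \<Rightarrow> real" where
 "crm2 M z d = pr M (oP z {True} {d} {True} {1}) * (pr M (oP z {True} {False} {True} {0}) * pr M (oP z {True} {True} UNIV UNIV)
     - pr M (oP z {True} {True} {True} {0}) * pr M (oP z {True} {False} UNIV UNIV))
   / (pr M (oP z {True} {False} {True} {0}) * pr M (oP z {True} {True} {True} {1})
     - pr M (oP z {True} {False} {True} {1}) * pr M (oP z {True} {True} {True} {0}))"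

lemma crm2_id: "ivm M1 \<Longrightarrow> ivm M2 \<Longrightarrow> obs_law M1 = obs_law M2 \<Longrightarrow> crm2 M1 z d = crm2 M2 z d"
  unfolding crm2_def using obs_id[of M1 M2 "{1}"] obs_id[of M1 M2 "{0}"] obs_id[of M1 M2 UNIV] sing_borel by simp

locale ZY = ivm2 +
  assumes bin: "binary_Y M"
    and ci: "cindep M RYv (\<lambda>w. (Uv w, Dv w)) (\<lambda>w. (Zv w, Yv w, RDv w))"
    and pos: "\<And>z y. y \<in> {0, 1} \<Longrightarrow> cpr M RYv (\<lambda>w. Zv w = z \<and> Yv w = y \<and> RDv w) > 0"
    and dep: "\<And>z. \<not> cindep_on M Yv Dv (\<lambda>w. Zv w = z)"
begin

lemma cellZY:
  "pr M (oP z {True} {d} {True} {y}) * pr M (\<lambda>w. Zv w = z \<and> Yv w = y \<and> RDv w)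
   = pr M (\<lambda>w. RYv w \<and> Zv w = z \<and> Yv w = y \<and> RDv w) * pr M (\<lambda>w. Zv w = z \<and> Dv w = d \<and> Yv w = y \<and> RDv w)"
proof -
  have "Measurable.pred borel (\<lambda>w. (Uv w, Dv w) \<in> UNIV \<times> {d})" by measurable
  from cindep_bool[OF ci RYv_meas this, of "(z, y, True)"]
  have c: "pr M (\<lambda>w. RYv w \<and> (Uv w, Dv w) \<in> UNIV \<times> {d} \<and> (Zv w, Yv w, RDv w) = (z, y, True)) * pr M (\<lambda>w. (Zv w, Yv w, RDv w) = (z, y, True))
    = pr M (\<lambda>w. RYv w \<and> (Zv w, Yv w, RDv w) = (z, y, True)) * pr M (\<lambda>w. (Uv w, Dv w) \<in> UNIV \<times> {d} \<and> (Zv w, Yv w, RDv w) = (z, y, True))" .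
  have e1: "pr M (\<lambda>w. RYv w \<and> (Uv w, Dv w) \<in> UNIV \<times> {d} \<and> (Zv w, Yv w, RDv w) = (z, y, True)) = pr M (oP z {True} {d} {True} {y})"
    by (rule pr_cong) (auto simp: oP_iff)
  have e2: "pr M (\<lambda>w. (Zv w, Yv w, RDv w) = (z, y, True)) = pr M (\<lambda>w. Zv w = z \<and> Yv w = y \<and> RDv w)"
    by (rule pr_cong) auto
  have e3: "pr M (\<lambda>w. RYv w \<and> (Zv w, Yv w, RDv w) = (z, y, True)) = pr M (\<lambda>w. RYv w \<and> Zv w = z \<and> Yv w = y \<and> RDv w)"
    by (rule pr_cong) auto
  have e4: "pr M (\<lambda>w. (Uv w, Dv w) \<in> UNIV \<times> {d} \<and> (Zv w, Yv w, RDv w) = (z, y, True)) = pr M (\<lambda>w. Zv w = z \<and> Dv w = d \<and> Yv w = y \<and> RDv w)"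
    by (rule pr_cong) auto
  show ?thesis using c e1 e2 e3 e4 by simp
qed

lemma mZY: "pr M (oP z {True} {d} UNIV UNIV) = pr M (\<lambda>w. Zv w = z \<and> Dv w = d \<and> Yv w = 0 \<and> RDv w) + pr M (\<lambda>w. Zv w = z \<and> Dv w = d \<and> Yv w = 1 \<and> RDv w)"
proof -
  have "pr M (oP z {True} {d} UNIV UNIV) = pr M (\<lambda>w. Zv w = z \<and> Dv w = d \<and> RDv w)"
    by (rule pr_cong) (auto simp: oP_iff)
  also have "\<dots> = pr M (\<lambda>w. (Zv w = z \<and> Dv w = d \<and> RDv w) \<and> Yv w = 0) + pr M (\<lambda>w. (Zv w = z \<and> Dv w = d \<and> RDv w) \<and> Yv w = 1)"
    by (rule pr_split_Y[OF binary_AE_Y[OF bin]]) measurable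
  also have "\<dots> = pr M (\<lambda>w. Zv w = z \<and> Dv w = d \<and> Yv w = 0 \<and> RDv w) + pr M (\<lambda>w. Zv w = z \<and> Dv w = d \<and> Yv w = 1 \<and> RDv w)"
    by (intro arg_cong2[where f="(+)"] pr_cong) auto
  finally show ?thesis .
qed

lemma rdq: "pr M (\<lambda>w. Zv w = z \<and> Dv w = d \<and> Yv w = y \<and> RDv w) * pr M (\<lambda>w. Zv w = z)
   = pr M (\<lambda>w. RDv w \<and> Zv w = z) * pr M (\<lambda>w. Zv w = z \<and> Dv w = d \<and> Yv w = y)"
proof -
  have "Measurable.pred borel (\<lambda>w. (Uv w, Dv w, Yv w) \<in> {(u, d', y'). d' = d \<and> y' = y})" by measurable
  from cindep_bool[OF rd_ci RDv_meas this, of z]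
  have c: "pr M (\<lambda>w. RDv w \<and> (Uv w, Dv w, Yv w) \<in> {(u, d', y'). d' = d \<and> y' = y} \<and> Zv w = z) * pr M (\<lambda>w. Zv w = z)
    = pr M (\<lambda>w. RDv w \<and> Zv w = z) * pr M (\<lambda>w. (Uv w, Dv w, Yv w) \<in> {(u, d', y'). d' = d \<and> y' = y} \<and> Zv w = z)" .
  have e1: "pr M (\<lambda>w. RDv w \<and> (Uv w, Dv w, Yv w) \<in> {(u, d', y'). d' = d \<and> y' = y} \<and> Zv w = z) = pr M (\<lambda>w. Zv w = z \<and> Dv w = d \<and> Yv w = y \<and> RDv w)"
    by (rule pr_cong) auto
  have e2: "pr M (\<lambda>w. (Uv w, Dv w, Yv w) \<in> {(u, d', y'). d' = d \<and> y' = y} \<and> Zv w = z) = pr M (\<lambda>w. Zv w = z \<and> Dv w = d \<and> Yv w = y)"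
    by (rule pr_cong) auto
  show ?thesis using c e1 e2 by simp
qed

lemma detZY: "pr M (\<lambda>w. Zv w = z \<and> Dv w = False \<and> Yv w = 0 \<and> RDv w) * pr M (\<lambda>w. Zv w = z \<and> Dv w = True \<and> Yv w = 1 \<and> RDv w)
   \<noteq> pr M (\<lambda>w. Zv w = z \<and> Dv w = False \<and> Yv w = 1 \<and> RDv w) * pr M (\<lambda>w. Zv w = z \<and> Dv w = True \<and> Yv w = 0 \<and> RDv w)"
proof
  define K where "K = pr M (\<lambda>w. RDv w \<and> Zv w = z)"
  define pz where "pz = pr M (\<lambda>w. Zv w = z)"
  have K: "K > 0" unfolding K_def by (rule K_pos)
  have pz: "pz > 0" unfolding pz_def by (rule Z_pos)
  define q where "q = (\<lambda>d y. pr M (\<lambda>w. Zv w = z \<and> Dv w = d \<and> Yv w = y))"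
  have pq: "\<And>d y. pr M (\<lambda>w. Zv w = z \<and> Dv w = d \<and> Yv w = y \<and> RDv w) = K * q d y / pz"
    using rdq pz unfolding K_def pz_def q_def by (simp add: field_simps)
  assume h: "pr M (\<lambda>w. Zv w = z \<and> Dv w = False \<and> Yv w = 0 \<and> RDv w) * pr M (\<lambda>w. Zv w = z \<and> Dv w = True \<and> Yv w = 1 \<and> RDv w)
   = pr M (\<lambda>w. Zv w = z \<and> Dv w = False \<and> Yv w = 1 \<and> RDv w) * pr M (\<lambda>w. Zv w = z \<and> Dv w = True \<and> Yv w = 0 \<and> RDv w)"
  then have "(K * K / (pz * pz)) * (q False 0 * q True 1) = (K * K / (pz * pz)) * (q False 1 * q True 0)"
    unfolding pq by (simp add: field_simps)
  then have hq: "q False 0 * q True 1 = q False 1 * q True 0" using K pz by simp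
  have "cindep_on M Yv Dv (\<lambda>w. Zv w = z)"
  proof (rule cindep_rank1[OF binary_AE_Y[OF bin]])
    show "Measurable.pred borel (\<lambda>w. Zv w = z)" by measurable
    show "Measurable.pred borel Dv" by measurable
    have q1: "pr M (\<lambda>w. Zv w = z \<and> Yv w = 0 \<and> Dv w) = q True 0" unfolding q_def by (rule pr_cong) auto
    have q2: "pr M (\<lambda>w. Zv w = z \<and> Yv w = 1 \<and> \<not> Dv w) = q False 1" unfolding q_def by (rule pr_cong) auto
    have q3: "pr M (\<lambda>w. Zv w = z \<and> Yv w = 0 \<and> \<not> Dv w) = q False 0" unfolding q_def by (rule pr_cong) auto
    have q4: "pr M (\<lambda>w. Zv w = z \<and> Yv w = 1 \<and> Dv w) = q True 1" unfolding q_def by (rule pr_cong) auto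
    show "pr M (\<lambda>w. Zv w = z \<and> Yv w = 0 \<and> Dv w) * pr M (\<lambda>w. Zv w = z \<and> Yv w = 1 \<and> \<not> Dv w)
       = pr M (\<lambda>w. Zv w = z \<and> Yv w = 0 \<and> \<not> Dv w) * pr M (\<lambda>w. Zv w = z \<and> Yv w = 1 \<and> Dv w)"
      unfolding q1 q2 q3 q4 using hq by (simp add: mult.commute)
  qed
  then show False using dep by blast
qed

lemma p1ZY: "pr M (\<lambda>w. Zv w = z \<and> Dv w = d \<and> Yv w = 1 \<and> RDv w) = crm2 M z d"
proof -
  have ps0: "pr M (\<lambda>w. RYv w \<and> Zv w = z \<and> Yv w = 0 \<and> RDv w) > 0" "pr M (\<lambda>w. Zv w = z \<and> Yv w = 0 \<and> RDv w) > 0"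
    using cpr_pos[OF pos[of 0 z]] by (simp_all add: conj_assoc)
  have ps1: "pr M (\<lambda>w. RYv w \<and> Zv w = z \<and> Yv w = 1 \<and> RDv w) > 0" "pr M (\<lambda>w. Zv w = z \<and> Yv w = 1 \<and> RDv w) > 0"
    using cpr_pos[OF pos[of 1 z]] by (simp_all add: conj_assoc)
  note cr = cramer[OF cellZY[of z False 0] cellZY[of z True 0] cellZY[of z False 1] cellZY[of z True 1]
      ps0(2) ps1(2) ps0(1) ps1(1) mZY[of z False] mZY[of z True] detZY[of z]]
  show ?thesis
  proof (cases d)
    case True then show ?thesis using cr(2) unfolding crm2_def by simp
  next
    case False then show ?thesis using cr(1) unfolding crm2_def by simp
  qed
qed

lemma formulaZY: "pr M (\<lambda>w. Yv w = 1 \<and> Zv w = z \<and> RDv w) = crm2 M z True + crm2 M z False"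
proof -
  have "pr M (\<lambda>w. (Yv w = 1 \<and> Zv w = z \<and> RDv w) \<and> Dv w) + pr M (\<lambda>w. (Yv w = 1 \<and> Zv w = z \<and> RDv w) \<and> \<not> Dv w)
     = pr M (\<lambda>w. Yv w = 1 \<and> Zv w = z \<and> RDv w)"
    by (rule pr_add) measurable
  moreover have "pr M (\<lambda>w. (Yv w = 1 \<and> Zv w = z \<and> RDv w) \<and> Dv w) = pr M (\<lambda>w. Zv w = z \<and> Dv w = True \<and> Yv w = 1 \<and> RDv w)"
    by (rule pr_cong) auto
  moreover have "pr M (\<lambda>w. (Yv w = 1 \<and> Zv w = z \<and> RDv w) \<and> \<not> Dv w) = pr M (\<lambda>w. Zv w = z \<and> Dv w = False \<and> Yv w = 1 \<and> RDv w)"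
    by (rule pr_cong) auto
  ultimately show ?thesis using p1ZY[of z True] p1ZY[of z False] by simp
qed

end

theorem ident_1ZY: "CACE_identifiable model_1ZY"
  unfolding CACE_identifiable_def
proof (intro allI impI)
  fix M1 M2 assume m1: "model_1ZY M1" and m2: "model_1ZY M2" and o: "obs_law M1 = obs_law M2"
  have z1: "ZY M1" using m1 unfolding model_1ZY_def by (auto simp: ZY_def ZY_axioms_def intro: ivm2I)
  have z2: "ZY M2" using m2 unfolding model_1ZY_def by (auto simp: ZY_def ZY_axioms_def intro: ivm2I)
  interpret A: ZY M1 by (rule z1)
  interpret B: ZY M2 by (rule z2)
  have j: "ivm M1" "ivm M2" by unfold_locales
  show "CACE M1 = CACE M2"
  proof (rule CACE_by_bin)
    show "ivm2 M1" "ivm2 M2" by unfold_locales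
    show "obs_law M1 = obs_law M2" by (rule o)
    show "binary_Y M1" "binary_Y M2" by (rule A.bin, rule B.bin)
    fix z
    show "pr M1 (\<lambda>w. Yv w = 1 \<and> Zv w = z \<and> RDv w) = pr M2 (\<lambda>w. Yv w = 1 \<and> Zv w = z \<and> RDv w)"
      unfolding A.formulaZY B.formulaZY using crm2_id[OF j o] by simp
  qed
qed


definition ot :: "bool \<Rightarrow> compliance" where "ot z = (if z then Always else Never)"

lemma pred_Uv_eq[measurable]: "Measurable.pred borel (\<lambda>w. Uv w = u)"
  by measurable

lemma oP_pred[measurable]: "B \<in> sets borel \<Longrightarrow> Measurable.pred borel (oP z Rs Es Qs B)"
proof -
  assume B: "B \<in> sets borel"
  have "{w. obs w \<in> oset z Rs Es Qs B} \<in> sets borel"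
    using vimage_borel[OF obs_meas oset_borel[OF B]] .
  then show ?thesis unfolding oP_def pred_def by simp
qed

definition Gf :: "unit_data measure \<Rightarrow> bool \<Rightarrow> real set \<Rightarrow> real" where
  "Gf M z B = pr M (oP z {True} {z} {True} B)
     - pr M (oP (\<not> z) {True} {z} {True} B) * pr M (\<lambda>w. RDv w \<and> Zv w = z) / pr M (\<lambda>w. RDv w \<and> Zv w = (\<not> z))"

locale UD = ivm2 +
  assumes ci: "cindep M RYv (\<lambda>w. (Zv w, Yv w)) (\<lambda>w. (Uv w, Dv w, RDv w))"
    and pos: "\<And>d. cpr M RYv (\<lambda>w. Uv w = Complier \<and> Dv w = d \<and> RDv w) > 0"
begin

lemma UD1:
  assumes [measurable]: "B \<in> sets borel"
  shows "pr M (\<lambda>w. Yv w \<in> B \<and> Uv w = Complier \<and> Zv w = z \<and> RDv w) * pr M (\<lambda>w. RYv w \<and> Yv w \<in> UNIV \<and> Uv w = Complier \<and> Zv w = z \<and> RDv w)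
   = pr M (\<lambda>w. RYv w \<and> Yv w \<in> B \<and> Uv w = Complier \<and> Zv w = z \<and> RDv w) * pr M (\<lambda>w. Uv w = Complier \<and> Zv w = z \<and> RDv w)"
proof -
  have "Measurable.pred borel (\<lambda>w. (Zv w, Yv w) \<in> UNIV \<times> B)" by measurable
  from cindep_bool[OF ci RYv_meas this, of "(Complier, z, True)"]
  have c: "pr M (\<lambda>w. RYv w \<and> (Zv w, Yv w) \<in> UNIV \<times> B \<and> (Uv w, Dv w, RDv w) = (Complier, z, True)) * pr M (\<lambda>w. (Uv w, Dv w, RDv w) = (Complier, z, True))
    = pr M (\<lambda>w. RYv w \<and> (Uv w, Dv w, RDv w) = (Complier, z, True)) * pr M (\<lambda>w. (Zv w, Yv w) \<in> UNIV \<times> B \<and> (Uv w, Dv w, RDv w) = (Complier, z, True))" .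
  have e1: "pr M (\<lambda>w. RYv w \<and> (Zv w, Yv w) \<in> UNIV \<times> B \<and> (Uv w, Dv w, RDv w) = (Complier, z, True)) = pr M (\<lambda>w. RYv w \<and> Yv w \<in> B \<and> Uv w = Complier \<and> Zv w = z \<and> RDv w)"
    by (rule pr_cong) (auto simp: Uv_def Dv_def split: if_splits)
  have e2: "pr M (\<lambda>w. (Uv w, Dv w, RDv w) = (Complier, z, True)) = pr M (\<lambda>w. Uv w = Complier \<and> Zv w = z \<and> RDv w)"
    by (rule pr_cong) (auto simp: Uv_def Dv_def split: if_splits)
  have e3: "pr M (\<lambda>w. RYv w \<and> (Uv w, Dv w, RDv w) = (Complier, z, True)) = pr M (\<lambda>w. RYv w \<and> Yv w \<in> UNIV \<and> Uv w = Complier \<and> Zv w = z \<and> RDv w)"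
    by (rule pr_cong) (auto simp: Uv_def Dv_def split: if_splits)
  have e4: "pr M (\<lambda>w. (Zv w, Yv w) \<in> UNIV \<times> B \<and> (Uv w, Dv w, RDv w) = (Complier, z, True)) = pr M (\<lambda>w. Yv w \<in> B \<and> Uv w = Complier \<and> Zv w = z \<and> RDv w)"
    by (rule pr_cong) (auto simp: Uv_def Dv_def split: if_splits)
  show ?thesis using c e1 e2 e3 e4 by (simp add: mult.commute)
qed

lemma UD_pos: "pr M (\<lambda>w. RYv w \<and> Yv w \<in> UNIV \<and> Uv w = Complier \<and> Zv w = z \<and> RDv w) > 0"
proof -
  have "pr M (\<lambda>w. RYv w \<and> (Uv w = Complier \<and> Dv w = z \<and> RDv w)) > 0" using cpr_pos[OF pos[of z]] by simp
  moreover have "pr M (\<lambda>w. RYv w \<and> (Uv w = Complier \<and> Dv w = z \<and> RDv w)) = pr M (\<lambda>w. RYv w \<and> Yv w \<in> UNIV \<and> Uv w = Complier \<and> Zv w = z \<and> RDv w)"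
    by (rule pr_cong) (auto simp: Uv_def Dv_def split: if_splits)
  ultimately show ?thesis by simp
qed

lemma UD_Ec: "pr M (\<lambda>w. Uv w = Complier \<and> Zv w = z \<and> RDv w) = pr M (\<lambda>w. RDv w \<and> Zv w = z) * pr M (\<lambda>w. Uv w = Complier)"
  by (rule L_ZRD[of "\<lambda>u d y. u = Complier" z, simplified]) measurable

lemma UD_G:
  assumes [measurable]: "B \<in> sets borel"
  shows "pr M (\<lambda>w. RYv w \<and> Yv w \<in> B \<and> Uv w = Complier \<and> Zv w = z \<and> RDv w)
    = pr M (oP z {True} {z} {True} B) - pr M (\<lambda>w. RYv w \<and> Yv w \<in> B \<and> Uv w = ot z \<and> Zv w = z \<and> RDv w)"
proof -
  have a: "pr M (\<lambda>w. oP z {True} {z} {True} B w \<and> Uv w = Complier) + pr M (\<lambda>w. oP z {True} {z} {True} B w \<and> \<not> Uv w = Complier)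
     = pr M (oP z {True} {z} {True} B)"
    by (rule pr_add) measurable
  have b: "pr M (\<lambda>w. oP z {True} {z} {True} B w \<and> Uv w = Complier) = pr M (\<lambda>w. RYv w \<and> Yv w \<in> B \<and> Uv w = Complier \<and> Zv w = z \<and> RDv w)"
    by (rule pr_cong) (auto simp: oP_iff Uv_def Dv_def split: if_splits)
  have c: "pr M (\<lambda>w. oP z {True} {z} {True} B w \<and> \<not> Uv w = Complier) = pr M (\<lambda>w. RYv w \<and> Yv w \<in> B \<and> Uv w = ot z \<and> Zv w = z \<and> RDv w)"
    by (rule pr_cong) (auto simp: oP_iff Uv_def Dv_def ot_def split: if_splits)
  show ?thesis using a b c by simp
qed

lemma UD_M:
  assumes [measurable]: "B \<in> sets borel"
  shows "pr M (\<lambda>w. RYv w \<and> Yv w \<in> B \<and> Uv w = ot z \<and> Zv w = z' \<and> RDv w) * pr M (\<lambda>w. Uv w = ot z \<and> RDv w)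
    = pr M (\<lambda>w. RYv w \<and> Uv w = ot z \<and> RDv w) * (pr M (\<lambda>w. RDv w \<and> Zv w = z') * pr M (\<lambda>w. Y1v w \<in> B \<and> Uv w = ot z))"
proof -
  have "Measurable.pred borel (\<lambda>w. (Zv w, Yv w) \<in> {z'} \<times> B)" by measurable
  from cindep_bool[OF ci RYv_meas this, of "(ot z, z, True)"]
  have c: "pr M (\<lambda>w. RYv w \<and> (Zv w, Yv w) \<in> {z'} \<times> B \<and> (Uv w, Dv w, RDv w) = (ot z, z, True)) * pr M (\<lambda>w. (Uv w, Dv w, RDv w) = (ot z, z, True))
    = pr M (\<lambda>w. RYv w \<and> (Uv w, Dv w, RDv w) = (ot z, z, True)) * pr M (\<lambda>w. (Zv w, Yv w) \<in> {z'} \<times> B \<and> (Uv w, Dv w, RDv w) = (ot z, z, True))" .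
  have e1: "pr M (\<lambda>w. RYv w \<and> (Zv w, Yv w) \<in> {z'} \<times> B \<and> (Uv w, Dv w, RDv w) = (ot z, z, True)) = pr M (\<lambda>w. RYv w \<and> Yv w \<in> B \<and> Uv w = ot z \<and> Zv w = z' \<and> RDv w)"
    by (rule pr_cong) (auto simp: Uv_def Dv_def ot_def split: if_splits)
  have e2: "pr M (\<lambda>w. (Uv w, Dv w, RDv w) = (ot z, z, True)) = pr M (\<lambda>w. Uv w = ot z \<and> RDv w)"
    by (rule pr_cong) (auto simp: Uv_def Dv_def ot_def split: if_splits)
  have e3: "pr M (\<lambda>w. RYv w \<and> (Uv w, Dv w, RDv w) = (ot z, z, True)) = pr M (\<lambda>w. RYv w \<and> Uv w = ot z \<and> RDv w)"
    by (rule pr_cong) (auto simp: Uv_def Dv_def ot_def split: if_splits)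
  have e4: "pr M (\<lambda>w. (Zv w, Yv w) \<in> {z'} \<times> B \<and> (Uv w, Dv w, RDv w) = (ot z, z, True)) = pr M (\<lambda>w. Yv w \<in> B \<and> Uv w = ot z \<and> Zv w = z' \<and> RDv w)"
    by (rule pr_cong) (auto simp: Uv_def Dv_def ot_def split: if_splits)
  have l: "pr M (\<lambda>w. Yv w \<in> B \<and> Uv w = ot z \<and> Zv w = z' \<and> RDv w) = pr M (\<lambda>w. RDv w \<and> Zv w = z') * pr M (\<lambda>w. (if z' then Y1v w else Y0v w) \<in> B \<and> Uv w = ot z)"
    by (rule L_ZRD[of "\<lambda>u d y. y \<in> B \<and> u = ot z" z', simplified]) measurable
  have "AE w in M. ((if z' then Y1v w else Y0v w) \<in> B \<and> Uv w = ot z) \<longleftrightarrow> (Y1v w \<in> B \<and> Uv w = ot z)"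
    using excl by (rule AE_mp) (rule AE_I2, auto simp: ot_def split: if_splits)
  then have h: "pr M (\<lambda>w. (if z' then Y1v w else Y0v w) \<in> B \<and> Uv w = ot z) = pr M (\<lambda>w. Y1v w \<in> B \<and> Uv w = ot z)"
    by (rule pr_AE) measurable
  show ?thesis using c e1 e2 e3 e4 l h by simp
qed

lemma UD_Mrel:
  assumes [measurable]: "B \<in> sets borel"
  shows "pr M (\<lambda>w. RYv w \<and> Yv w \<in> B \<and> Uv w = ot z \<and> Zv w = z \<and> RDv w) * pr M (\<lambda>w. RDv w \<and> Zv w = (\<not> z))
    = pr M (\<lambda>w. RYv w \<and> Yv w \<in> B \<and> Uv w = ot z \<and> Zv w = (\<not> z) \<and> RDv w) * pr M (\<lambda>w. RDv w \<and> Zv w = z)"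
proof (cases "pr M (\<lambda>w. Uv w = ot z \<and> RDv w) = 0")
  case True
  have "pr M (\<lambda>w. RYv w \<and> Yv w \<in> B \<and> Uv w = ot z \<and> Zv w = z \<and> RDv w) = 0"
  proof (rule pr_zero_sub[OF _ _ True])
    show "Measurable.pred borel (\<lambda>w. Uv w = ot z \<and> RDv w)" by measurable
  qed auto
  moreover have "pr M (\<lambda>w. RYv w \<and> Yv w \<in> B \<and> Uv w = ot z \<and> Zv w = (\<not> z) \<and> RDv w) = 0"
  proof (rule pr_zero_sub[OF _ _ True])
    show "Measurable.pred borel (\<lambda>w. Uv w = ot z \<and> RDv w)" by measurable
  qed auto
  ultimately show ?thesis by simp
next
  case False
  then have p: "pr M (\<lambda>w. Uv w = ot z \<and> RDv w) > 0" using pr_nonneg[of "\<lambda>w. Uv w = ot z \<and> RDv w"] by simp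

  show ?thesis
  proof -
    define e where "e = pr M (\<lambda>w. Uv w = ot z \<and> RDv w)"
    define r where "r = pr M (\<lambda>w. RYv w \<and> Uv w = ot z \<and> RDv w)"
    define hh where "hh = pr M (\<lambda>w. Y1v w \<in> B \<and> Uv w = ot z)"
    define a where "a = pr M (\<lambda>w. RYv w \<and> Yv w \<in> B \<and> Uv w = ot z \<and> Zv w = z \<and> RDv w)"
    define b where "b = pr M (\<lambda>w. RYv w \<and> Yv w \<in> B \<and> Uv w = ot z \<and> Zv w = (\<not> z) \<and> RDv w)"
    define k1 where "k1 = pr M (\<lambda>w. RDv w \<and> Zv w = z)"
    define k2 where "k2 = pr M (\<lambda>w. RDv w \<and> Zv w = (\<not> z))"
    have q1: "a * e = r * (k1 * hh)" and q2: "b * e = r * (k2 * hh)" and "e > 0"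
      using UD_M[OF assms, of z z] UD_M[OF assms, of z "\<not> z"] p
      unfolding e_def r_def hh_def a_def b_def k1_def k2_def by simp_all
    have "a * k2 * e = (a * e) * k2" by (simp only: mult_ac)
    also have "\<dots> = (r * (k1 * hh)) * k2" by (simp only: q1)
    also have "\<dots> = (r * (k2 * hh)) * k1" by (simp only: mult_ac)
    also have "\<dots> = (b * e) * k1" by (simp only: q2)
    also have "\<dots> = b * k1 * e" by (simp only: mult_ac)
    finally have "a * k2 * e = b * k1 * e" .
    then have "a * k2 = b * k1" using \<open>e > 0\<close> by simp
    then show ?thesis unfolding a_def b_def k1_def k2_def .
  qed
qed

lemma UD_Mobs:
  assumes [measurable]: "B \<in> sets borel"
  shows "pr M (\<lambda>w. RYv w \<and> Yv w \<in> B \<and> Uv w = ot z \<and> Zv w = (\<not> z) \<and> RDv w) = pr M (oP (\<not> z) {True} {z} {True} B)"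
proof (rule pr_AE)
  show "AE w in M. (RYv w \<and> Yv w \<in> B \<and> Uv w = ot z \<and> Zv w = (\<not> z) \<and> RDv w) \<longleftrightarrow> oP (\<not> z) {True} {z} {True} B w"
    using no_def by (rule AE_mp) (rule AE_I2, auto simp: oP_iff Uv_def Dv_def ot_def split: if_splits)
qed measurable

lemma UD_Gobs:
  assumes [measurable]: "B \<in> sets borel"
  shows "pr M (\<lambda>w. RYv w \<and> Yv w \<in> B \<and> Uv w = Complier \<and> Zv w = z \<and> RDv w) = Gf M z B"
proof -
  have k: "pr M (\<lambda>w. RDv w \<and> Zv w = (\<not> z)) > 0" by (rule K_pos)
  have "pr M (\<lambda>w. RYv w \<and> Yv w \<in> B \<and> Uv w = ot z \<and> Zv w = z \<and> RDv w)
     = pr M (oP (\<not> z) {True} {z} {True} B) * pr M (\<lambda>w. RDv w \<and> Zv w = z) / pr M (\<lambda>w. RDv w \<and> Zv w = (\<not> z))"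
    using UD_Mrel[OF assms, of z] UD_Mobs[OF assms, of z] k by (simp add: field_simps)
  then show ?thesis using UD_G[OF assms, of z] unfolding Gf_def by simp
qed

lemma formulaUD:
  assumes [measurable]: "B \<in> sets borel"
  shows "pr M (\<lambda>w. Yv w \<in> B \<and> Uv w = Complier \<and> Zv w = z \<and> RDv w)
    = Gf M z B * (pr M (\<lambda>w. RDv w \<and> Zv w = z) * pr M (\<lambda>w. Uv w = Complier)) / Gf M z UNIV"
proof -
  have g: "pr M (\<lambda>w. RYv w \<and> Yv w \<in> UNIV \<and> Uv w = Complier \<and> Zv w = z \<and> RDv w) = Gf M z UNIV"
    by (rule UD_Gobs) simp
  have p: "Gf M z UNIV > 0" using UD_pos[of z] g by simp
  show ?thesis using UD1[OF assms, of z] UD_Gobs[OF assms, of z] g UD_Ec[of z] p by (simp add: field_simps)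
qed

end

theorem ident_1UD: "CACE_identifiable model_1UD"
  unfolding CACE_identifiable_def
proof (intro allI impI)
  fix M1 M2 assume m1: "model_1UD M1" and m2: "model_1UD M2" and o: "obs_law M1 = obs_law M2"
  have z1: "UD M1" using m1 unfolding model_1UD_def by (auto simp: UD_def UD_axioms_def intro: ivm2I)
  have z2: "UD M2" using m2 unfolding model_1UD_def by (auto simp: UD_def UD_axioms_def intro: ivm2I)
  interpret A: UD M1 by (rule z1)
  interpret B: UD M2 by (rule z2)
  have j: "ivm M1" "ivm M2" by unfold_locales
  have i: "ivm2 M1" "ivm2 M2" by unfold_locales
  have Kid: "\<And>z. pr M1 (\<lambda>w. RDv w \<and> Zv w = z) = pr M2 (\<lambda>w. RDv w \<and> Zv w = z)"
    using K_id[OF j i o] .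
  have pc: "pr M1 (\<lambda>w. Uv w = Complier) = pr M2 (\<lambda>w. Uv w = Complier)" by (rule pc_id[OF j i o])
  have Gid: "\<And>z B. B \<in> sets borel \<Longrightarrow> Gf M1 z B = Gf M2 z B"
    unfolding Gf_def using obs_id[OF j o] Kid by simp
  show "CACE M1 = CACE M2"
  proof (rule CACE_by_X[OF i o])
    fix z B assume B: "(B::real set) \<in> sets borel"
    show "pr M1 (\<lambda>w. Yv w \<in> B \<and> Uv w = Complier \<and> Zv w = z \<and> RDv w) = pr M2 (\<lambda>w. Yv w \<in> B \<and> Uv w = Complier \<and> Zv w = z \<and> RDv w)"
      unfolding A.formulaUD[OF B] B.formulaUD[OF B] using Gid[OF B] Gid[of UNIV] Kid pc by simp
  qed
qed


lemma uy_alg: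
  fixes p0 p1 q0 q1 tT0 tT1 tF0 tF1 sT0 sT1 sF0 sF1 pc :: real
  assumes pos: "p0 > 0" "p1 > 0" "q0 > 0" "q1 > 0" "pc > 0"
    and e: "p0 * tT0 = q0 * sT0" "p0 * tF0 = q0 * sF0" "p1 * tT1 = q1 * sT1" "p1 * tF1 = q1 * sF1"
    and s: "tT0 + tT1 = pc" "tF0 + tF1 = pc" "sT0 + sT1 = pc" "sF0 + sF1 = pc"
  shows "tT1 - tF1 = sT1 - sF1"
proof -
  define l0 where "l0 = p0 / q0"
  define l1 where "l1 = p1 / q1"
  have sv: "sT0 = l0 * tT0" "sF0 = l0 * tF0" "sT1 = l1 * tT1" "sF1 = l1 * tF1"
    using e pos by (simp_all add: l0_def l1_def field_simps)
  have zT: "(l0 - 1) * pc + (l1 - l0) * tT1 = 0"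
  proof -
    have "l0 * tT0 + l1 * tT1 = tT0 + tT1" using s sv by simp
    moreover have "tT0 = pc - tT1" using s by simp
    ultimately show ?thesis by (simp add: algebra_simps)
  qed
  have zF: "(l0 - 1) * pc + (l1 - l0) * tF1 = 0"
  proof -
    have "l0 * tF0 + l1 * tF1 = tF0 + tF1" using s sv by simp
    moreover have "tF0 = pc - tF1" using s by simp
    ultimately show ?thesis by (simp add: algebra_simps)
  qed
  have "(l1 - l0) * (tT1 - tF1) = 0" using zT zF by (simp add: algebra_simps)
  then consider "l1 = l0" | "tT1 = tF1" by auto
  then show ?thesis
  proof cases
    case 1
    then have "(l0 - 1) * pc = 0" using zT by simp
    then have "l0 = 1" using pos by simp
    then show ?thesis using 1 sv by simp
  next
    case 2
    then show ?thesis using sv by simp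
  qed
qed


context ivm2 begin
lemma L_ZRD_Yu:
  assumes [measurable]: "B \<in> sets borel"
  shows "pr M (\<lambda>w. Yv w \<in> B \<and> Uv w = u \<and> Zv w = z \<and> RDv w)
    = pr M (\<lambda>w. RDv w \<and> Zv w = z) * pr M (\<lambda>w. (if z then Y1v w else Y0v w) \<in> B \<and> Uv w = u)"
  by (rule L_ZRD[of "\<lambda>u' d y. y \<in> B \<and> u' = u" z, simplified]) measurable
end

locale UY = ivm2 +
  assumes bin: "binary_Y M"
    and ci: "cindep M RYv (\<lambda>w. (Zv w, Dv w)) (\<lambda>w. (Uv w, Yv w, RDv w))"
    and pos: "\<And>y. y \<in> {0, 1} \<Longrightarrow> cpr M RYv (\<lambda>w. Uv w = Complier \<and> Yv w = y \<and> RDv w) > 0"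
begin

lemma UY_A:
  "pr M (\<lambda>w. RYv w \<and> Yv w \<in> {y} \<and> Uv w = Complier \<and> Zv w = z \<and> RDv w) * pr M (\<lambda>w. Uv w = Complier \<and> Yv w = y \<and> RDv w)
   = pr M (\<lambda>w. RYv w \<and> Uv w = Complier \<and> Yv w = y \<and> RDv w) * pr M (\<lambda>w. Yv w \<in> {y} \<and> Uv w = Complier \<and> Zv w = z \<and> RDv w)"
proof -
  have "Measurable.pred borel (\<lambda>w. (Zv w, Dv w) \<in> {z} \<times> UNIV)" by measurable
  from cindep_bool[OF ci RYv_meas this, of "(Complier, y, True)"]
  have c: "pr M (\<lambda>w. RYv w \<and> (Zv w, Dv w) \<in> {z} \<times> UNIV \<and> (Uv w, Yv w, RDv w) = (Complier, y, True)) * pr M (\<lambda>w. (Uv w, Yv w, RDv w) = (Complier, y, True))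
    = pr M (\<lambda>w. RYv w \<and> (Uv w, Yv w, RDv w) = (Complier, y, True)) * pr M (\<lambda>w. (Zv w, Dv w) \<in> {z} \<times> UNIV \<and> (Uv w, Yv w, RDv w) = (Complier, y, True))" .
  have e1: "pr M (\<lambda>w. RYv w \<and> (Zv w, Dv w) \<in> {z} \<times> UNIV \<and> (Uv w, Yv w, RDv w) = (Complier, y, True)) = pr M (\<lambda>w. RYv w \<and> Yv w \<in> {y} \<and> Uv w = Complier \<and> Zv w = z \<and> RDv w)"
    by (rule pr_cong) auto
  have e2: "pr M (\<lambda>w. (Uv w, Yv w, RDv w) = (Complier, y, True)) = pr M (\<lambda>w. Uv w = Complier \<and> Yv w = y \<and> RDv w)"
    by (rule pr_cong) auto
  have e3: "pr M (\<lambda>w. RYv w \<and> (Uv w, Yv w, RDv w) = (Complier, y, True)) = pr M (\<lambda>w. RYv w \<and> Uv w = Complier \<and> Yv w = y \<and> RDv w)"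
    by (rule pr_cong) auto
  have e4: "pr M (\<lambda>w. (Zv w, Dv w) \<in> {z} \<times> UNIV \<and> (Uv w, Yv w, RDv w) = (Complier, y, True)) = pr M (\<lambda>w. Yv w \<in> {y} \<and> Uv w = Complier \<and> Zv w = z \<and> RDv w)"
    by (rule pr_cong) auto
  show ?thesis using c e1 e2 e3 e4 by simp
qed

lemma UY_M:
  "pr M (\<lambda>w. RYv w \<and> Yv w \<in> {y} \<and> Uv w = ot z \<and> Zv w = z' \<and> RDv w) * pr M (\<lambda>w. Uv w = ot z \<and> Yv w = y \<and> RDv w)
    = pr M (\<lambda>w. RYv w \<and> Uv w = ot z \<and> Yv w = y \<and> RDv w) * (pr M (\<lambda>w. RDv w \<and> Zv w = z') * pr M (\<lambda>w. Y1v w \<in> {y} \<and> Uv w = ot z))"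
proof -
  have "Measurable.pred borel (\<lambda>w. (Zv w, Dv w) \<in> {z'} \<times> UNIV)" by measurable
  from cindep_bool[OF ci RYv_meas this, of "(ot z, y, True)"]
  have c: "pr M (\<lambda>w. RYv w \<and> (Zv w, Dv w) \<in> {z'} \<times> UNIV \<and> (Uv w, Yv w, RDv w) = (ot z, y, True)) * pr M (\<lambda>w. (Uv w, Yv w, RDv w) = (ot z, y, True))
    = pr M (\<lambda>w. RYv w \<and> (Uv w, Yv w, RDv w) = (ot z, y, True)) * pr M (\<lambda>w. (Zv w, Dv w) \<in> {z'} \<times> UNIV \<and> (Uv w, Yv w, RDv w) = (ot z, y, True))" .
  have e1: "pr M (\<lambda>w. RYv w \<and> (Zv w, Dv w) \<in> {z'} \<times> UNIV \<and> (Uv w, Yv w, RDv w) = (ot z, y, True)) = pr M (\<lambda>w. RYv w \<and> Yv w \<in> {y} \<and> Uv w = ot z \<and> Zv w = z' \<and> RDv w)"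
    by (rule pr_cong) auto
  have e2: "pr M (\<lambda>w. (Uv w, Yv w, RDv w) = (ot z, y, True)) = pr M (\<lambda>w. Uv w = ot z \<and> Yv w = y \<and> RDv w)"
    by (rule pr_cong) auto
  have e3: "pr M (\<lambda>w. RYv w \<and> (Uv w, Yv w, RDv w) = (ot z, y, True)) = pr M (\<lambda>w. RYv w \<and> Uv w = ot z \<and> Yv w = y \<and> RDv w)"
    by (rule pr_cong) auto
  have e4: "pr M (\<lambda>w. (Zv w, Dv w) \<in> {z'} \<times> UNIV \<and> (Uv w, Yv w, RDv w) = (ot z, y, True)) = pr M (\<lambda>w. Yv w \<in> {y} \<and> Uv w = ot z \<and> Zv w = z' \<and> RDv w)"
    by (rule pr_cong) auto
  have l: "pr M (\<lambda>w. Yv w \<in> {y} \<and> Uv w = ot z \<and> Zv w = z' \<and> RDv w) = pr M (\<lambda>w. RDv w \<and> Zv w = z') * pr M (\<lambda>w. (if z' then Y1v w else Y0v w) \<in> {y} \<and> Uv w = ot z)"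
    by (rule L_ZRD_Yu) simp
  have "AE w in M. ((if z' then Y1v w else Y0v w) \<in> {y} \<and> Uv w = ot z) \<longleftrightarrow> (Y1v w \<in> {y} \<and> Uv w = ot z)"
    using excl by (rule AE_mp) (rule AE_I2, auto simp: ot_def split: if_splits)
  then have h: "pr M (\<lambda>w. (if z' then Y1v w else Y0v w) \<in> {y} \<and> Uv w = ot z) = pr M (\<lambda>w. Y1v w \<in> {y} \<and> Uv w = ot z)"
    by (rule pr_AE) measurable
  show ?thesis using c e1 e2 e3 e4 l h by simp
qed

lemma UY_Mrel:
  "pr M (\<lambda>w. RYv w \<and> Yv w \<in> {y} \<and> Uv w = ot z \<and> Zv w = z \<and> RDv w) * pr M (\<lambda>w. RDv w \<and> Zv w = (\<not> z))
    = pr M (\<lambda>w. RYv w \<and> Yv w \<in> {y} \<and> Uv w = ot z \<and> Zv w = (\<not> z) \<and> RDv w) * pr M (\<lambda>w. RDv w \<and> Zv w = z)"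
proof (cases "pr M (\<lambda>w. Uv w = ot z \<and> Yv w = y \<and> RDv w) = 0")
  case True
  have "pr M (\<lambda>w. RYv w \<and> Yv w \<in> {y} \<and> Uv w = ot z \<and> Zv w = z \<and> RDv w) = 0"
  proof (rule pr_zero_sub[OF _ _ True])
    show "Measurable.pred borel (\<lambda>w. Uv w = ot z \<and> Yv w = y \<and> RDv w)" by measurable
  qed auto
  moreover have "pr M (\<lambda>w. RYv w \<and> Yv w \<in> {y} \<and> Uv w = ot z \<and> Zv w = (\<not> z) \<and> RDv w) = 0"
  proof (rule pr_zero_sub[OF _ _ True])
    show "Measurable.pred borel (\<lambda>w. Uv w = ot z \<and> Yv w = y \<and> RDv w)" by measurable
  qed auto
  ultimately show ?thesis by simp
next
  case False
  then have p: "pr M (\<lambda>w. Uv w = ot z \<and> Yv w = y \<and> RDv w) > 0" using pr_nonneg[of "\<lambda>w. Uv w = ot z \<and> Yv w = y \<and> RDv w"] by simp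
  define e where "e = pr M (\<lambda>w. Uv w = ot z \<and> Yv w = y \<and> RDv w)"
  define r where "r = pr M (\<lambda>w. RYv w \<and> Uv w = ot z \<and> Yv w = y \<and> RDv w)"
  define hh where "hh = pr M (\<lambda>w. Y1v w \<in> {y} \<and> Uv w = ot z)"
  define a where "a = pr M (\<lambda>w. RYv w \<and> Yv w \<in> {y} \<and> Uv w = ot z \<and> Zv w = z \<and> RDv w)"
  define b where "b = pr M (\<lambda>w. RYv w \<and> Yv w \<in> {y} \<and> Uv w = ot z \<and> Zv w = (\<not> z) \<and> RDv w)"
  define k1 where "k1 = pr M (\<lambda>w. RDv w \<and> Zv w = z)"
  define k2 where "k2 = pr M (\<lambda>w. RDv w \<and> Zv w = (\<not> z))"
  have q1: "a * e = r * (k1 * hh)" and q2: "b * e = r * (k2 * hh)" and "e > 0"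
    using UY_M[of y z z] UY_M[of y z "\<not> z"] p
    unfolding e_def r_def hh_def a_def b_def k1_def k2_def by simp_all
  have "a * k2 * e = (a * e) * k2" by (simp only: mult_ac)
  also have "\<dots> = (r * (k1 * hh)) * k2" by (simp only: q1)
  also have "\<dots> = (r * (k2 * hh)) * k1" by (simp only: mult_ac)
  also have "\<dots> = (b * e) * k1" by (simp only: q2)
  also have "\<dots> = b * k1 * e" by (simp only: mult_ac)
  finally have "a * k2 * e = b * k1 * e" .
  then have "a * k2 = b * k1" using \<open>e > 0\<close> by simp
  then show ?thesis unfolding a_def b_def k1_def k2_def .
qed

lemma UY_G:
  "pr M (\<lambda>w. RYv w \<and> Yv w \<in> {y} \<and> Uv w = Complier \<and> Zv w = z \<and> RDv w)
    = pr M (oP z {True} {z} {True} {y}) - pr M (\<lambda>w. RYv w \<and> Yv w \<in> {y} \<and> Uv w = ot z \<and> Zv w = z \<and> RDv w)"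
proof -
  have a: "pr M (\<lambda>w. oP z {True} {z} {True} {y} w \<and> Uv w = Complier) + pr M (\<lambda>w. oP z {True} {z} {True} {y} w \<and> \<not> Uv w = Complier)
     = pr M (oP z {True} {z} {True} {y})"
    by (rule pr_add) measurable
  have b: "pr M (\<lambda>w. oP z {True} {z} {True} {y} w \<and> Uv w = Complier) = pr M (\<lambda>w. RYv w \<and> Yv w \<in> {y} \<and> Uv w = Complier \<and> Zv w = z \<and> RDv w)"
    by (rule pr_cong) (auto simp: oP_iff Uv_def Dv_def split: if_splits)
  have c: "pr M (\<lambda>w. oP z {True} {z} {True} {y} w \<and> \<not> Uv w = Complier) = pr M (\<lambda>w. RYv w \<and> Yv w \<in> {y} \<and> Uv w = ot z \<and> Zv w = z \<and> RDv w)"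
    by (rule pr_cong) (auto simp: oP_iff Uv_def Dv_def ot_def split: if_splits)
  show ?thesis using a b c by simp
qed

lemma UY_Mobs:
  "pr M (\<lambda>w. RYv w \<and> Yv w \<in> {y} \<and> Uv w = ot z \<and> Zv w = (\<not> z) \<and> RDv w) = pr M (oP (\<not> z) {True} {z} {True} {y})"
proof (rule pr_AE)
  show "AE w in M. (RYv w \<and> Yv w \<in> {y} \<and> Uv w = ot z \<and> Zv w = (\<not> z) \<and> RDv w) \<longleftrightarrow> oP (\<not> z) {True} {z} {True} {y} w"
    using no_def by (rule AE_mp) (rule AE_I2, auto simp: oP_iff Uv_def Dv_def ot_def split: if_splits)
qed measurable

lemma UY_Gobs:
  "pr M (\<lambda>w. RYv w \<and> Yv w \<in> {y} \<and> Uv w = Complier \<and> Zv w = z \<and> RDv w) = Gf M z {y}"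
proof -
  have k: "pr M (\<lambda>w. RDv w \<and> Zv w = (\<not> z)) > 0" by (rule K_pos)
  have "pr M (\<lambda>w. RYv w \<and> Yv w \<in> {y} \<and> Uv w = ot z \<and> Zv w = z \<and> RDv w)
     = pr M (oP (\<not> z) {True} {z} {True} {y}) * pr M (\<lambda>w. RDv w \<and> Zv w = z) / pr M (\<lambda>w. RDv w \<and> Zv w = (\<not> z))"
    using UY_Mrel[of y z] UY_Mobs[of y z] k by (simp add: field_simps)
  then show ?thesis using UY_G[of y z] unfolding Gf_def by simp
qed

definition tt :: "bool \<Rightarrow> real \<Rightarrow> real" where
  "tt z y = pr M (\<lambda>w. (if z then Y1v w else Y0v w) \<in> {y} \<and> Uv w = Complier)"

lemma UY_t: "Gf M z {y} * pr M (\<lambda>w. Uv w = Complier \<and> Yv w = y \<and> RDv w)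
   = (pr M (\<lambda>w. RYv w \<and> Uv w = Complier \<and> Yv w = y \<and> RDv w) * pr M (\<lambda>w. RDv w \<and> Zv w = z)) * tt z y"
proof -
  have l: "pr M (\<lambda>w. Yv w \<in> {y} \<and> Uv w = Complier \<and> Zv w = z \<and> RDv w) = pr M (\<lambda>w. RDv w \<and> Zv w = z) * tt z y"
    unfolding tt_def by (rule L_ZRD_Yu) simp
  show ?thesis using UY_A[of y z] UY_Gobs[of y z] l by (simp add: mult_ac)
qed

lemma UY_sum: "tt z 0 + tt z 1 = pr M (\<lambda>w. Uv w = Complier)"
proof -
  have a: "pr M (\<lambda>w. Uv w = Complier \<and> (if z then Y1v w else Y0v w) = 1) + pr M (\<lambda>w. Uv w = Complier \<and> \<not> (if z then Y1v w else Y0v w) = 1)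
     = pr M (\<lambda>w. Uv w = Complier)" by (rule pr_add) measurable
  have "AE w in M. (Uv w = Complier \<and> \<not> (if z then Y1v w else Y0v w) = 1) \<longleftrightarrow> ((if z then Y1v w else Y0v w) \<in> {0} \<and> Uv w = Complier)"
    using binary_AE[OF bin, of z] by (rule AE_mp) (rule AE_I2, auto)
  then have b: "pr M (\<lambda>w. Uv w = Complier \<and> \<not> (if z then Y1v w else Y0v w) = 1) = tt z 0"
    unfolding tt_def by (rule pr_AE) measurable
  have c: "pr M (\<lambda>w. Uv w = Complier \<and> (if z then Y1v w else Y0v w) = 1) = tt z 1"
    unfolding tt_def by (rule pr_cong) auto
  show ?thesis using a b c by simp
qed

lemma CACE_UY: "CACE M = (tt True 1 - tt False 1) / pr M (\<lambda>w. Uv w = Complier)"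
proof -
  have "integral\<^sup>L M (\<lambda>w. if Uv w = Complier then Y1v w else 0) = pr M (\<lambda>w. (if Uv w = Complier then Y1v w else 0) = 1)"
  proof (rule int_binary)
    show "(\<lambda>w. if Uv w = Complier then Y1v w else 0) \<in> borel_measurable borel" by measurable
    show "AE w in M. (if Uv w = Complier then Y1v w else 0) \<in> {0, 1}"
      using binary_AE[OF bin, of True] by (rule AE_mp) (rule AE_I2, auto)
  qed
  also have "\<dots> = tt True 1" unfolding tt_def by (rule pr_cong) auto
  finally have i1: "integral\<^sup>L M (\<lambda>w. if Uv w = Complier then Y1v w else 0) = tt True 1" .
  have "integral\<^sup>L M (\<lambda>w. if Uv w = Complier then Y0v w else 0) = pr M (\<lambda>w. (if Uv w = Complier then Y0v w else 0) = 1)"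
  proof (rule int_binary)
    show "(\<lambda>w. if Uv w = Complier then Y0v w else 0) \<in> borel_measurable borel" by measurable
    show "AE w in M. (if Uv w = Complier then Y0v w else 0) \<in> {0, 1}"
      using binary_AE[OF bin, of False] by (rule AE_mp) (rule AE_I2, auto)
  qed
  also have "\<dots> = tt False 1" unfolding tt_def by (rule pr_cong) auto
  finally have i0: "integral\<^sup>L M (\<lambda>w. if Uv w = Complier then Y0v w else 0) = tt False 1" .
  show ?thesis using CACE_X i1 i0 by simp
qed

lemma UY_pi: "pr M (\<lambda>w. RYv w \<and> Uv w = Complier \<and> Yv w = y \<and> RDv w) / pr M (\<lambda>w. Uv w = Complier \<and> Yv w = y \<and> RDv w) > 0"
  if "y \<in> {0, 1}"
  using cpr_pos[OF pos[OF that]] by (simp add: conj_assoc)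

lemma UY_eq: "y \<in> {0, 1} \<Longrightarrow>
  (pr M (\<lambda>w. RYv w \<and> Uv w = Complier \<and> Yv w = y \<and> RDv w) / pr M (\<lambda>w. Uv w = Complier \<and> Yv w = y \<and> RDv w)) * tt z y
  = Gf M z {y} / pr M (\<lambda>w. RDv w \<and> Zv w = z)"
proof -
  assume y: "y \<in> {0, 1}"
  have e: "pr M (\<lambda>w. Uv w = Complier \<and> Yv w = y \<and> RDv w) > 0" using cpr_pos[OF pos[OF y]] by simp
  have k: "pr M (\<lambda>w. RDv w \<and> Zv w = z) > 0" by (rule K_pos)
  show ?thesis using UY_t[of z y] e k by (simp add: field_simps)
qed

end

theorem ident_1UY: "CACE_identifiable model_1UY"
  unfolding CACE_identifiable_def
proof (intro allI impI)
  fix M1 M2 assume m1: "model_1UY M1" and m2: "model_1UY M2" and o: "obs_law M1 = obs_law M2"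
  have z1: "UY M1" using m1 unfolding model_1UY_def by (auto simp: UY_def UY_axioms_def intro: ivm2I)
  have z2: "UY M2" using m2 unfolding model_1UY_def by (auto simp: UY_def UY_axioms_def intro: ivm2I)
  interpret A: UY M1 by (rule z1)
  interpret B: UY M2 by (rule z2)
  have j: "ivm M1" "ivm M2" by unfold_locales
  have i: "ivm2 M1" "ivm2 M2" by unfold_locales
  have Kid: "\<And>z. pr M1 (\<lambda>w. RDv w \<and> Zv w = z) = pr M2 (\<lambda>w. RDv w \<and> Zv w = z)"
    using K_id[OF j i o] .
  have pc: "pr M1 (\<lambda>w. Uv w = Complier) = pr M2 (\<lambda>w. Uv w = Complier)" by (rule pc_id[OF j i o])
  have Gid: "\<And>z y. Gf M1 z {y} = Gf M2 z {y}"
    unfolding Gf_def using obs_id[OF j o] Kid sing_borel by simp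
  define p0 where "p0 = pr M1 (\<lambda>w. RYv w \<and> Uv w = Complier \<and> Yv w = 0 \<and> RDv w) / pr M1 (\<lambda>w. Uv w = Complier \<and> Yv w = 0 \<and> RDv w)"
  define p1 where "p1 = pr M1 (\<lambda>w. RYv w \<and> Uv w = Complier \<and> Yv w = 1 \<and> RDv w) / pr M1 (\<lambda>w. Uv w = Complier \<and> Yv w = 1 \<and> RDv w)"
  define q0 where "q0 = pr M2 (\<lambda>w. RYv w \<and> Uv w = Complier \<and> Yv w = 0 \<and> RDv w) / pr M2 (\<lambda>w. Uv w = Complier \<and> Yv w = 0 \<and> RDv w)"
  define q1 where "q1 = pr M2 (\<lambda>w. RYv w \<and> Uv w = Complier \<and> Yv w = 1 \<and> RDv w) / pr M2 (\<lambda>w. Uv w = Complier \<and> Yv w = 1 \<and> RDv w)"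
  have eqs: "\<And>z y. y \<in> {0, 1} \<Longrightarrow> (pr M1 (\<lambda>w. RYv w \<and> Uv w = Complier \<and> Yv w = y \<and> RDv w) / pr M1 (\<lambda>w. Uv w = Complier \<and> Yv w = y \<and> RDv w)) * A.tt z y
     = (pr M2 (\<lambda>w. RYv w \<and> Uv w = Complier \<and> Yv w = y \<and> RDv w) / pr M2 (\<lambda>w. Uv w = Complier \<and> Yv w = y \<and> RDv w)) * B.tt z y"
    using A.UY_eq B.UY_eq Gid Kid by simp
  have pcpos: "pr M1 (\<lambda>w. Uv w = Complier) > 0"
  proof -
    have "0 < pr M1 (\<lambda>w. Uv w = Complier \<and> Yv w = 0 \<and> RDv w)" using cpr_pos[OF A.pos[of 0]] by simp
    also have "\<dots> \<le> pr M1 (\<lambda>w. Uv w = Complier)"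
    proof (rule A.pr_mono)
      show "Measurable.pred borel (\<lambda>w. Uv w = Complier)" by measurable
    qed auto
    finally show ?thesis .
  qed
  have "A.tt True 1 - A.tt False 1 = B.tt True 1 - B.tt False 1"
  proof (rule uy_alg[of p0 p1 q0 q1 "pr M1 (\<lambda>w. Uv w = Complier)"])
    show "p0 > 0" "p1 > 0" unfolding p0_def p1_def by (rule A.UY_pi, simp)+
    show "q0 > 0" "q1 > 0" unfolding q0_def q1_def by (rule B.UY_pi, simp)+
    show "pr M1 (\<lambda>w. Uv w = Complier) > 0" by (rule pcpos)
    show "p0 * A.tt True 0 = q0 * B.tt True 0" "p0 * A.tt False 0 = q0 * B.tt False 0"
      unfolding p0_def q0_def using eqs[of 0] by simp_all
    show "p1 * A.tt True 1 = q1 * B.tt True 1" "p1 * A.tt False 1 = q1 * B.tt False 1"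
      unfolding p1_def q1_def using eqs[of 1] by simp_all
    show "A.tt True 0 + A.tt True 1 = pr M1 (\<lambda>w. Uv w = Complier)" "A.tt False 0 + A.tt False 1 = pr M1 (\<lambda>w. Uv w = Complier)"
      by (rule A.UY_sum)+
    show "B.tt True 0 + B.tt True 1 = pr M1 (\<lambda>w. Uv w = Complier)" "B.tt False 0 + B.tt False 1 = pr M1 (\<lambda>w. Uv w = Complier)"
      unfolding pc by (rule B.UY_sum)+
  qed
  then show "CACE M1 = CACE M2" using A.CACE_UY B.CACE_UY pc by simp
qed


theorem theorem6:
  shows "CACE_identifiable model_1ZD \<and> CACE_identifiable model_1UD
    \<and> CACE_identifiable model_1UY \<and> CACE_identifiable model_1DY
    \<and> CACE_identifiable model_1ZY"
  using ident_1ZD ident_1UD ident_1UY ident_1DY ident_1ZY by blast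

end
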